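(* Let $G_n$ be the level-$n$ graph approximation of the level-3 Sierpinski gasket $SG_3$. Then for $n\ge 2$ the number of spanning trees of $G_n$ is $$\tau(G_n)=2^{a_n}3^{b_n}5^{c_n}7^{d_n},$$ where $a_n=\frac{2}{5}(6^n-1)$, $b_n=\frac{1}{25}(13\cdot 6^n-15n+12)$, $c_n=\frac{1}{25}(3\cdot 6^n-15n-3)$, $d_n=\frac{1}{25}(7\cdot 6^n+15n-7)$.
   Context: The level-3 Sierpinski gasket $SG_3$ is the self-similar set generated by the $m=6$ similitudes of ratio $1/3$ of the plane mapping an equilateral triangle with vertex set $V_0=\{p_1,p_2,p_3\}$ onto the six upward-pointing triangles obtained when the triangle is subdivided into nine congruent equilateral triangles of side $1/3$ of the original. The approximating graphs are: $G_0$ is the complete graph (triangle) on $V_0$; for $n\ge1$, $V_n=\bigcup_{w\in\{1,\dots,6\}^n}F_w(V_0)$ and $G_n$ is the union over words $w$ of length $n$ of the complete graphs on $F_w(V_0)$, where $F_w=F_{w_1}\circ\cdots\circ F_{w_n}$. *)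

theory Defs
  imports Complex_Main
begin

definition sg_p1 :: complex where "sg_p1 = 0"
definition sg_p2 :: complex where "sg_p2 = 1"
definition sg_p3 :: complex where "sg_p3 = Complex (1/2) (sqrt 3 / 2)"

definition sg_V0 :: "complex set" where "sg_V0 = {sg_p1, sg_p2, sg_p3}"

text \<open>Translation part of the six similitudes F_1..F_6 of ratio 1/3: they map the
  big triangle onto the six upward-pointing triangles of side 1/3.\<close>

definition sg_shift :: "nat \<Rightarrow> complex" where
  "sg_shift i =
     (if i = 1 then 0
      else if i = 2 then sg_p2 / 3
      else if i = 3 then 2 * sg_p2 / 3
      else if i = 4 then sg_p3 / 3
      else if i = 5 then (sg_p2 + sg_p3) / 3
      else 2 * sg_p3 / 3)"

definition sg_F :: "nat \<Rightarrow> complex \<Rightarrow> complex" where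
  "sg_F i z = z / 3 + sg_shift i"

fun sg_Fw :: "nat list \<Rightarrow> complex \<Rightarrow> complex" where
  "sg_Fw [] = id"
| "sg_Fw (i # w) = sg_F i \<circ> sg_Fw w"

definition sg_words :: "nat \<Rightarrow> nat list set" where
  "sg_words n = {w. length w = n \<and> set w \<subseteq> {1..6}}"

definition sg_cells :: "nat \<Rightarrow> complex set set" where
  "sg_cells n = (\<lambda>w. sg_Fw w ` sg_V0) ` sg_words n"

definition sg_V :: "nat \<Rightarrow> complex set" where
  "sg_V n = \<Union> (sg_cells n)"

definition sg_E :: "nat \<Rightarrow> complex set set" where
  "sg_E n = {{x, y} | x y. x \<noteq> y \<and> (\<exists>C \<in> sg_cells n. x \<in> C \<and> y \<in> C)}"

definition edge_reach :: "'a set set \<Rightarrow> 'a \<Rightarrow> 'a \<Rightarrow> bool" where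
  "edge_reach T = (\<lambda>x y. \<exists>e \<in> T. e = {x, y})\<^sup>*\<^sup>*"

definition spanning_tree :: "'a set \<Rightarrow> 'a set set \<Rightarrow> 'a set set \<Rightarrow> bool" where
  "spanning_tree V E T \<longleftrightarrow>
     T \<subseteq> E \<and>
     (\<forall>x \<in> V. \<forall>y \<in> V. edge_reach T x y) \<and>
     (\<forall>e \<in> T. \<forall>x y. e = {x, y} \<longrightarrow> \<not> edge_reach (T - {e}) x y)"

definition num_spanning_trees :: "'a set \<Rightarrow> 'a set set \<Rightarrow> nat" where
  "num_spanning_trees V E = card {T. spanning_tree V E T}"

end

theory Submission
  imports Defs
begin


abbreviation er where "er \<equiv> edge_reach"

lemma er_refl[simp]: "er T x x"
  by (simp add: edge_reach_def)

lemma er_edge: "{x,y} \<in> T \<Longrightarrow> er T x y"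
  unfolding edge_reach_def by (rule r_into_rtranclp) auto

lemma er_trans: "er T x y \<Longrightarrow> er T y z \<Longrightarrow> er T x z"
  unfolding edge_reach_def by (rule rtranclp_trans)

lemma er_sym: "er T x y \<Longrightarrow> er T y x"
  unfolding edge_reach_def
proof (induction rule: rtranclp_induct)
  case base then show ?case by simp
next
  case (step y z)
  then obtain e where "e \<in> T" "e = {y,z}" by auto
  then have "(\<lambda>x y. \<exists>e\<in>T. e = {x, y}) z y" by (auto simp: insert_commute)
  then show ?case using step(3) by (rule converse_rtranclp_into_rtranclp)
qed

lemma er_sym_iff: "er T x y \<longleftrightarrow> er T y x"
  using er_sym by metis

lemma er_mono: "T \<subseteq> T' \<Longrightarrow> er T x y \<Longrightarrow> er T' x y"
  unfolding edge_reach_def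
  by (erule rtranclp_mono[THEN predicate2D, rotated]) auto

lemma er_supp: "er T x y \<Longrightarrow> x \<noteq> y \<Longrightarrow> x \<in> \<Union>T \<and> y \<in> \<Union>T"
  unfolding edge_reach_def
proof (induction rule: rtranclp_induct)
  case base then show ?case by simp
next
  case (step y z)
  then obtain e where "e \<in> T" "e = {y,z}" by auto
  then show ?case using step by (cases "x = y") auto
qed

lemma er_supp1: "er T x y \<Longrightarrow> x \<noteq> y \<Longrightarrow> x \<in> \<Union>T"
  using er_supp by metis
lemma er_supp2: "er T x y \<Longrightarrow> x \<noteq> y \<Longrightarrow> y \<in> \<Union>T"
  using er_supp by metis

lemma er_empty: "er {} x y \<longleftrightarrow> x = y"
  using er_supp by fastforce

lemma rt_add_pair:
  assumes "(\<lambda>a b. R a b \<or> (a = x \<and> b = y) \<or> (a = y \<and> b = x))\<^sup>*\<^sup>* a b"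
  shows "R\<^sup>*\<^sup>* a b \<or> (R\<^sup>*\<^sup>* a x \<and> R\<^sup>*\<^sup>* y b) \<or> (R\<^sup>*\<^sup>* a y \<and> R\<^sup>*\<^sup>* x b)"
  using assms
proof (induction rule: rtranclp_induct)
  case base then show ?case by simp
next
  case (step b c)
  from step(2) show ?case
  proof (elim disjE)
    assume "R b c"
    then show ?thesis using step(3) by (meson rtranclp.rtrancl_into_rtrancl)
  next
    assume "b = x \<and> c = y" then show ?thesis using step(3) by auto
  next
    assume "b = y \<and> c = x" then show ?thesis using step(3) by auto
  qed
qed

lemma rt_add_pair_rev:
  assumes "R\<^sup>*\<^sup>* a b \<or> (R\<^sup>*\<^sup>* a x \<and> R\<^sup>*\<^sup>* y b) \<or> (R\<^sup>*\<^sup>* a y \<and> R\<^sup>*\<^sup>* x b)"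
  shows "(\<lambda>a b. R a b \<or> (a = x \<and> b = y) \<or> (a = y \<and> b = x))\<^sup>*\<^sup>* a b"
proof -
  let ?Q = "(\<lambda>a b. R a b \<or> (a = x \<and> b = y) \<or> (a = y \<and> b = x))"
  have m: "R\<^sup>*\<^sup>* u v \<Longrightarrow> ?Q\<^sup>*\<^sup>* u v" for u v
    by (erule rtranclp_mono[THEN predicate2D, rotated]) auto
  have xy: "?Q\<^sup>*\<^sup>* x y" "?Q\<^sup>*\<^sup>* y x" by (auto intro: r_into_rtranclp)
  from assms show ?thesis
    using m xy by (meson rtranclp_trans)
qed

lemma er_remove:
  assumes "er T a b" "e = {x,y}"
  shows "er (T - {e}) a b \<or> (er (T-{e}) a x \<and> er (T-{e}) y b) \<or> (er (T-{e}) a y \<and> er (T-{e}) x b)"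
proof -
  let ?R = "\<lambda>a b. \<exists>e'\<in>T - {e}. e' = {a, b}"
  have le: "(\<lambda>a b. \<exists>e'\<in>T. e' = {a, b}) \<le> (\<lambda>a b. ?R a b \<or> (a = x \<and> b = y) \<or> (a = y \<and> b = x))"
    using assms(2) by (auto simp: doubleton_eq_iff)
  have "(\<lambda>a b. ?R a b \<or> (a = x \<and> b = y) \<or> (a = y \<and> b = x))\<^sup>*\<^sup>* a b"
    by (rule rtranclp_mono[THEN predicate2D, OF le assms(1)[unfolded edge_reach_def]])
  then show ?thesis unfolding edge_reach_def by (rule rt_add_pair)
qed

lemma er_Un: "er (A \<union> C) a b \<longleftrightarrow> (\<lambda>u v. er A u v \<or> er C u v)\<^sup>*\<^sup>* a b"
proof
  assume "er (A \<union> C) a b"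
  then show "(\<lambda>u v. er A u v \<or> er C u v)\<^sup>*\<^sup>* a b"
    unfolding edge_reach_def[of "A \<union> C"]
    by (rule rtranclp_mono[THEN predicate2D, rotated]) (auto intro: er_edge)
next
  assume "(\<lambda>u v. er A u v \<or> er C u v)\<^sup>*\<^sup>* a b"
  then show "er (A \<union> C) a b"
    by (induction rule: rtranclp_induct) (auto intro: er_trans er_mono[rotated])
qed

lemma er_path_edge:
  assumes "finite T" "er T u v" "u \<noteq> v"
  shows "\<exists>e\<in>T. \<exists>x y. e = {x,y} \<and> er (T-{e}) u x \<and> er (T-{e}) y v"
  using assms
proof (induction "card T" arbitrary: T rule: less_induct)
  case less
  show ?case
  proof (cases "\<exists>e\<in>T. er (T - {e}) u v")
    case True
    then obtain e where e: "e \<in> T" "er (T - {e}) u v" by blast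
    have "card (T - {e}) < card T" using e less.prems(1) by (meson card_Diff1_less)
    then have "\<exists>e'\<in>T - {e}. \<exists>x y. e' = {x,y} \<and> er (T - {e} - {e'}) u x \<and> er (T - {e} - {e'}) y v"
      using less.hyps[of "T - {e}"] less.prems(1,3) e(2) by auto
    then obtain e' x y where e': "e' \<in> T - {e}" "e' = {x,y}" "er (T - {e} - {e'}) u x" "er (T - {e} - {e'}) y v"
      by blast
    then show ?thesis by (intro bexI[of _ e'] exI[of _ x] exI[of _ y]) (auto elim: er_mono[rotated])
  next
    case False
    obtain w where "(\<lambda>x y. \<exists>e\<in>T. e = {x, y}) u w"
    proof -
      have "(\<lambda>x y. \<exists>e\<in>T. e = {x, y})\<^sup>*\<^sup>* u v" using less.prems(2) by (simp add: edge_reach_def)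
      then show ?thesis using less.prems(3) that by (cases rule: converse_rtranclpE) auto
    qed
    then obtain e where e: "e \<in> T" and xy: "e = {u,w}" by blast
    obtain x y where xy: "e = {x,y}" using xy by blast
    from er_remove[OF less.prems(2) xy] False e
    have "(er (T-{e}) u x \<and> er (T-{e}) y v) \<or> (er (T-{e}) u y \<and> er (T-{e}) x v)" by auto
    then show ?thesis
    proof
      assume "er (T-{e}) u x \<and> er (T-{e}) y v"
      then show ?thesis using e xy by blast
    next
      assume "er (T-{e}) u y \<and> er (T-{e}) x v"
      moreover have "e = {y,x}" using xy by auto
      ultimately show ?thesis using e by blast
    qed
  qed
qed

definition acyc :: "'a set set \<Rightarrow> bool" where
  "acyc T \<longleftrightarrow> (\<forall>e \<in> T. \<forall>x y. e = {x, y} \<longrightarrow> \<not> er (T - {e}) x y)"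

lemma acyc_mono: "acyc T' \<Longrightarrow> T \<subseteq> T' \<Longrightarrow> acyc T"
  unfolding acyc_def by (meson Diff_mono er_mono order_refl subsetD)


lemma card3_cases:
  assumes "finite S" "card S \<le> 3" "a \<in> S" "b \<in> S" "c \<in> S" "a \<noteq> b" "a \<noteq> c" "b \<noteq> c" "z \<in> S"
  shows "z = a \<or> z = b \<or> z = c"
proof -
  have "{a,b,c} \<subseteq> S" using assms by auto
  moreover have "card {a,b,c} = 3" using assms by auto
  ultimately have "S = {a,b,c}" using assms(1,2) by (metis card_seteq)
  then show ?thesis using assms(9) by auto
qed

lemma acyc_glue_one:
  assumes aA: "acyc A" and aC: "acyc C"
    and supp: "\<Union>A \<inter> \<Union>C \<subseteq> S" and fS: "finite S" and cS: "card S \<le> 3"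
    and P: "\<And>u v. u \<in> S \<Longrightarrow> v \<in> S \<Longrightarrow> er A u v \<Longrightarrow> er C u v \<Longrightarrow> u = v"
    and eA: "e \<in> A" and exy: "e = {x,y}"
  shows "\<not> er ((A \<union> C) - {e}) x y"
proof
  assume H: "er ((A \<union> C) - {e}) x y"
  have eC: "e \<notin> C"
  proof
    assume "e \<in> C"
    then have "x \<in> S" "y \<in> S" using eA exy supp by auto
    moreover have "er A x y" "er C x y" using eA \<open>e \<in> C\<close> exy er_edge by metis+
    ultimately have "x = y" using P by blast
    then have "er (A - {e}) x y" by simp
    then show False using aA eA exy unfolding acyc_def by blast
  qed
  define A' where "A' = A - {e}"
  have nxy: "\<not> er A' x y" using aA eA exy unfolding acyc_def A'_def by blast
  have "(A \<union> C) - {e} = A' \<union> C" using eC by (auto simp: A'_def)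
  with H have H': "(\<lambda>u v. er A' u v \<or> er C u v)\<^sup>*\<^sup>* x y" by (simp add: er_Un)
  have xA: "x \<in> \<Union>A" "y \<in> \<Union>A" using eA exy by auto
  have A'A: "\<Union>A' \<subseteq> \<Union>A" by (auto simp: A'_def)
  have a'a: "er A' u v \<Longrightarrow> er A u v" for u v by (rule er_mono[of A'], auto simp: A'_def)
  have merge: "er A' u x \<Longrightarrow> er A' y v \<Longrightarrow> er A u v" for u v
  proof -
    assume h: "er A' u x" "er A' y v"
    have "er A x y" using er_edge[of x y A] eA exy by simp
    then show "er A u v" using a'a[OF h(1)] a'a[OF h(2)] by (meson er_trans)
  qed
  have sA: "er A' u v \<Longrightarrow> u \<noteq> v \<Longrightarrow> u \<in> \<Union>A \<and> v \<in> \<Union>A" for u v using er_supp[of A' u v] A'A by blast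
  have sC: "er C u v \<Longrightarrow> u \<noteq> v \<Longrightarrow> u \<in> \<Union>C \<and> v \<in> \<Union>C" for u v using er_supp[of C u v] by blast
  define BAD where "BAD = (\<exists>u\<in>S. \<exists>v\<in>S. u \<noteq> v \<and> er A u v \<and> er C u v)"
  have nBAD: "\<not> BAD" using P unfolding BAD_def by blast
  define I where "I z = (er A' x z
      \<or> (\<exists>s1\<in>S. er A' x s1 \<and> er C s1 z)
      \<or> (\<exists>s1\<in>S. \<exists>s2\<in>S. er A' x s1 \<and> er C s1 s2 \<and> \<not> er A' x s2 \<and> \<not> er A' y s2 \<and> er A' s2 z)
      \<or> (\<exists>s1\<in>S. \<exists>s2\<in>S. \<exists>s3\<in>S. er A' x s1 \<and> er C s1 s2 \<and> \<not> er A' x s2 \<and> \<not> er A' y s2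
           \<and> er A' s2 s3 \<and> s3 \<noteq> s2 \<and> er C s3 z)
      \<or> BAD)" for z
  have inS: "u \<in> \<Union>A \<Longrightarrow> u \<in> \<Union>C \<Longrightarrow> u \<in> S" for u using supp by blast
  have "I y" using H'
  proof (induction rule: rtranclp_induct)
    case base then show ?case by (simp add: I_def)
  next
    case (step z z')
    show ?case
    proof (cases "z = z'")
      case True then show ?thesis using step(3) by simp
    next
      case zz: False
      from step(2) show ?thesis
      proof
        assume a: "er A' z z'"
        have zA: "z \<in> \<Union>A" using sA[OF a zz] by blast
        from step(3)[unfolded I_def] show ?thesis
        proof (elim disjE)
          assume "er A' x z" then show ?thesis using a unfolding I_def by (meson er_trans)
        next
          assume "\<exists>s1\<in>S. er A' x s1 \<and> er C s1 z"
          then obtain s1 where s1: "s1 \<in> S" "er A' x s1" "er C s1 z" by blast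
          show ?thesis
          proof (cases "z = s1")
            case True then show ?thesis using s1 a unfolding I_def by (meson er_trans)
          next
            case False
            then have zS: "z \<in> S" using sC[OF s1(3)] zA inS by blast
            consider "er A' x z" | "er A' y z" | "\<not> er A' x z \<and> \<not> er A' y z" by blast
            then show ?thesis
            proof cases
              case 1 then show ?thesis using a unfolding I_def by (meson er_trans)
            next
              case 2
              have "s1 \<noteq> z" using 2 s1(2) nxy by (meson er_sym er_trans)
              moreover have "er A s1 z" using merge[of s1 z] s1(2) 2 by (meson er_sym)
              ultimately have BAD using s1 zS unfolding BAD_def by blast
              then show ?thesis unfolding I_def by blast
            next
              case 3
              then have "\<not> er A' x z" "\<not> er A' y z" by auto
              then have "\<exists>s1\<in>S. \<exists>s2\<in>S. er A' x s1 \<and> er C s1 s2 \<and> \<not> er A' x s2 \<and> \<not> er A' y s2 \<and> er A' s2 z'"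
                using s1 zS a by blast
              then show ?thesis unfolding I_def by blast
            qed
          qed
        next
          assume "\<exists>s1\<in>S. \<exists>s2\<in>S. er A' x s1 \<and> er C s1 s2 \<and> \<not> er A' x s2 \<and> \<not> er A' y s2 \<and> er A' s2 z"
          then show ?thesis using a unfolding I_def by (meson er_trans)
        next
          assume "\<exists>s1\<in>S. \<exists>s2\<in>S. \<exists>s3\<in>S. er A' x s1 \<and> er C s1 s2 \<and> \<not> er A' x s2 \<and> \<not> er A' y s2
           \<and> er A' s2 s3 \<and> s3 \<noteq> s2 \<and> er C s3 z"
          then obtain s1 s2 s3 where s: "s1 \<in> S" "s2 \<in> S" "s3 \<in> S" "er A' x s1" "er C s1 s2" "\<not> er A' x s2"
            "\<not> er A' y s2" "er A' s2 s3" "s3 \<noteq> s2" "er C s3 z" by blast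
          show ?thesis
          proof (cases "z = s3")
            case True
            then have "er A' s2 z'" using s(8) a by (meson er_trans)
            then show ?thesis using s unfolding I_def by blast
          next
            case False
            then have zS: "z \<in> S" using sC[OF s(10)] zA inS by blast
            have d12: "s1 \<noteq> s2" using s by blast
            have d13: "s1 \<noteq> s3" using s by (meson er_sym er_trans)
            have "z = s1 \<or> z = s2" using card3_cases[OF fS cS s(1,2,3) d12 d13 s(9)[symmetric] zS] False by blast
            then have "er C s2 s3"
              using s by (metis er_sym er_trans)
            moreover have "er A s2 s3" using a'a s(8) by blast
            ultimately have BAD using s(2,3,9) unfolding BAD_def
              by (intro bexI[of _ s2] bexI[of _ s3]) auto
            then show ?thesis unfolding I_def by blast
          qed
        next
          assume BAD then show ?thesis unfolding I_def by blast
        qed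
      next
        assume a: "er C z z'"
        have zC: "z \<in> \<Union>C" using sC[OF a zz] by blast
        from step(3)[unfolded I_def] show ?thesis
        proof (elim disjE)
          assume h: "er A' x z"
          have "z \<in> \<Union>A" using h xA sA by (cases "x = z") auto
          then have "z \<in> S" using zC inS by blast
          then show ?thesis using h a unfolding I_def by blast
        next
          assume "\<exists>s1\<in>S. er A' x s1 \<and> er C s1 z"
          then show ?thesis using a unfolding I_def by (meson er_trans)
        next
          assume "\<exists>s1\<in>S. \<exists>s2\<in>S. er A' x s1 \<and> er C s1 s2 \<and> \<not> er A' x s2 \<and> \<not> er A' y s2 \<and> er A' s2 z"
          then obtain s1 s2 where s: "s1 \<in> S" "s2 \<in> S" "er A' x s1" "er C s1 s2" "\<not> er A' x s2"
            "\<not> er A' y s2" "er A' s2 z" by blast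
          show ?thesis
          proof (cases "z = s2")
            case True
            then have "er C s1 z'" using s(4) a by (meson er_trans)
            then show ?thesis using s unfolding I_def by blast
          next
            case False
            then have "z \<in> S" using sA[OF s(7)] zC inS by blast
            then have "\<exists>s1\<in>S. \<exists>s2\<in>S. \<exists>s3\<in>S. er A' x s1 \<and> er C s1 s2 \<and> \<not> er A' x s2 \<and> \<not> er A' y s2
           \<and> er A' s2 s3 \<and> s3 \<noteq> s2 \<and> er C s3 z'" using s a False by blast
            then show ?thesis unfolding I_def by blast
          qed
        next
          assume "\<exists>s1\<in>S. \<exists>s2\<in>S. \<exists>s3\<in>S. er A' x s1 \<and> er C s1 s2 \<and> \<not> er A' x s2 \<and> \<not> er A' y s2
           \<and> er A' s2 s3 \<and> s3 \<noteq> s2 \<and> er C s3 z"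
          then show ?thesis using a unfolding I_def by (meson er_trans)
        next
          assume BAD then show ?thesis unfolding I_def by blast
        qed
      qed
    qed
  qed
  then show False
  proof (unfold I_def, elim disjE)
    assume "er A' x y" then show False using nxy by blast
  next
    assume "\<exists>s1\<in>S. er A' x s1 \<and> er C s1 y"
    then obtain s1 where s1: "s1 \<in> S" "er A' x s1" "er C s1 y" by blast
    have "s1 \<noteq> y" using s1 nxy by blast
    then have "y \<in> S" using sC[OF s1(3)] xA inS by blast
    moreover have "er A s1 y" using merge[of s1 y] s1 by (meson er_sym er_refl)
    ultimately have BAD using s1 \<open>s1 \<noteq> y\<close> unfolding BAD_def by blast
    then show False using nBAD by blast
  next
    assume "\<exists>s1\<in>S. \<exists>s2\<in>S. er A' x s1 \<and> er C s1 s2 \<and> \<not> er A' x s2 \<and> \<not> er A' y s2 \<and> er A' s2 y"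
    then show False by (meson er_sym)
  next
    assume "\<exists>s1\<in>S. \<exists>s2\<in>S. \<exists>s3\<in>S. er A' x s1 \<and> er C s1 s2 \<and> \<not> er A' x s2 \<and> \<not> er A' y s2
           \<and> er A' s2 s3 \<and> s3 \<noteq> s2 \<and> er C s3 y"
    then obtain s1 s2 s3 where s: "s1 \<in> S" "s2 \<in> S" "s3 \<in> S" "er A' x s1" "er C s1 s2" "\<not> er A' x s2"
            "\<not> er A' y s2" "er A' s2 s3" "s3 \<noteq> s2" "er C s3 y" by blast
    show False
    proof (cases "y = s3")
      case True then show False using s by (meson er_sym)
    next
      case False
      then have yS: "y \<in> S" using sC[OF s(10)] xA inS by blast
      have d12: "s1 \<noteq> s2" using s by blast
      have d13: "s1 \<noteq> s3" using s by (meson er_sym er_trans)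
      have "y = s1 \<or> y = s2" using card3_cases[OF fS cS s(1,2,3) d12 d13 s(9)[symmetric] yS] False by blast
      then show False using s nxy by auto
    qed
  next
    assume BAD then show False using nBAD by blast
  qed
qed

lemma acyc_glue:
  assumes aA: "acyc A" and aC: "acyc C"
    and supp: "\<Union>A \<inter> \<Union>C \<subseteq> S" and fS: "finite S" and cS: "card S \<le> 3"
    and P: "\<And>u v. u \<in> S \<Longrightarrow> v \<in> S \<Longrightarrow> er A u v \<Longrightarrow> er C u v \<Longrightarrow> u = v"
  shows "acyc (A \<union> C)"
  unfolding acyc_def
proof (intro ballI allI impI)
  fix e x y assume e: "e \<in> A \<union> C" "e = {x,y}"
  show "\<not> er (A \<union> C - {e}) x y"
  proof (cases "e \<in> A")
    case True then show ?thesis using acyc_glue_one[OF assms] e by blast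
  next
    case False
    then have "e \<in> C" using e by blast
    moreover have "\<Union>C \<inter> \<Union>A \<subseteq> S" using supp by blast
    ultimately have "\<not> er ((C \<union> A) - {e}) x y"
      using acyc_glue_one[OF aC aA _ fS cS, of e x y] P e(2) by blast
    then show ?thesis by (simp add: Un_commute)
  qed
qed

lemma acyc_glue_P:
  assumes "acyc (A \<union> C)" "A \<inter> C = {}" "finite A" "er A u v" "er C u v"
  shows "u = v"
proof (rule ccontr)
  assume "u \<noteq> v"
  then obtain e x y where e: "e \<in> A" "e = {x,y}" "er (A-{e}) u x" "er (A-{e}) y v"
    using er_path_edge[OF assms(3,4)] by blast
  have eC: "e \<notin> C" using e assms(2) by blast
  have m1: "er (A \<union> C - {e}) u x" "er (A \<union> C - {e}) y v"
    using e by (auto elim: er_mono[rotated])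
  have m2: "er (A \<union> C - {e}) u v" using assms(5) eC by (auto elim: er_mono[rotated])
  have "er (A \<union> C - {e}) x y" using m1 m2 by (meson er_sym er_trans)
  then show False using assms(1) e unfolding acyc_def by blast
qed


lemma skel_dir:
  assumes sub: "\<And>i. i\<in>I \<Longrightarrow> \<Union>(T i) \<subseteq> V i" and BV: "\<And>i. i \<in> I \<Longrightarrow> B i \<subseteq> V i"
    and disj: "\<And>i j. i\<in>I \<Longrightarrow> j\<in>I \<Longrightarrow> i\<noteq>j \<Longrightarrow> V i \<inter> V j \<subseteq> B i \<inter> B j"
    and a: "a \<in> (\<Union>i\<in>I. B i)"
    and r: "er (\<Union>i\<in>I. T i) a y"
  shows "\<exists>c. (\<lambda>u v. \<exists>i\<in>I. u \<in> B i \<and> v \<in> B i \<and> er (T i) u v)\<^sup>*\<^sup>* a c \<and> c \<in> (\<Union>i\<in>I. B i)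
             \<and> (y = c \<or> (\<exists>i\<in>I. c \<in> B i \<and> er (T i) c y))"
  using r[unfolded edge_reach_def]
proof (induction rule: rtranclp_induct)
  case base then show ?case using a by blast
next
  case (step y z)
  let ?R = "(\<lambda>u v. \<exists>i\<in>I. u \<in> B i \<and> v \<in> B i \<and> er (T i) u v)"
  from step(2) obtain j where j: "j \<in> I" "{y,z} \<in> T j" by auto
  have yz: "y \<in> V j" "z \<in> V j" using j sub by auto
  from step(3) obtain c where c: "?R\<^sup>*\<^sup>* a c" "c \<in> (\<Union>i\<in>I. B i)" "y = c \<or> (\<exists>i\<in>I. c \<in> B i \<and> er (T i) c y)"
    by blast
  have new: "y \<in> (\<Union>i\<in>I. B i) \<Longrightarrow> ?R\<^sup>*\<^sup>* a y \<Longrightarrow> ?case"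
  proof -
    assume yJ: "y \<in> (\<Union>i\<in>I. B i)" and ay: "?R\<^sup>*\<^sup>* a y"
    then obtain k where k: "k \<in> I" "y \<in> B k" by blast
    have "y \<in> B j"
    proof (cases "k = j")
      case True then show ?thesis using k by simp
    next
      case False
      then have "y \<in> V k \<inter> V j" using k BV yz by auto
      then show ?thesis using disj[OF k(1) j(1) False] by blast
    qed
    moreover have "er (T j) y z" using j er_edge by metis
    ultimately show ?case using ay yJ j(1) by blast
  qed
  from c(3) show ?case
  proof
    assume "y = c" then show ?case using new c by blast
  next
    assume "\<exists>i\<in>I. c \<in> B i \<and> er (T i) c y"
    then obtain i where i: "i \<in> I" "c \<in> B i" "er (T i) c y" by blast
    show ?case
    proof (cases "i = j")
      case True
      then have "er (T i) c z" using i j er_edge er_trans by metis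
      then show ?thesis using c i by blast
    next
      case False
      show ?thesis
      proof (cases "y = c")
        case True then show ?thesis using new c by blast
      next
        case False2: False
        have "y \<in> V i" using er_supp2[OF i(3)] False2 sub[OF i(1)] by auto
        then have "y \<in> B i \<inter> B j" using disj[OF i(1) j(1) False] yz by blast
        then have "?R c y" using i by blast
        then have "?R\<^sup>*\<^sup>* a y" by (rule rtranclp.rtrancl_into_rtrancl[OF c(1)])
        then show ?thesis using new \<open>y \<in> B i \<inter> B j\<close> j(1) by blast
      qed
    qed
  qed
qed

lemma skel:
  assumes sub: "\<And>i. i\<in>I \<Longrightarrow> \<Union>(T i) \<subseteq> V i" and BV: "\<And>i. i \<in> I \<Longrightarrow> B i \<subseteq> V i"
    and disj: "\<And>i j. i\<in>I \<Longrightarrow> j\<in>I \<Longrightarrow> i\<noteq>j \<Longrightarrow> V i \<inter> V j \<subseteq> B i \<inter> B j"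
    and a: "a \<in> (\<Union>i\<in>I. B i)" and b: "b \<in> (\<Union>i\<in>I. B i)"
  shows "er (\<Union>i\<in>I. T i) a b \<longleftrightarrow> (\<lambda>u v. \<exists>i\<in>I. u \<in> B i \<and> v \<in> B i \<and> er (T i) u v)\<^sup>*\<^sup>* a b"
proof
  let ?R = "(\<lambda>u v. \<exists>i\<in>I. u \<in> B i \<and> v \<in> B i \<and> er (T i) u v)"
  assume "er (\<Union>i\<in>I. T i) a b"
  from skel_dir[OF sub BV disj a this] obtain c where c: "?R\<^sup>*\<^sup>* a c" "c \<in> (\<Union>i\<in>I. B i)"
    "b = c \<or> (\<exists>i\<in>I. c \<in> B i \<and> er (T i) c b)" by blast
  from c(3) show "?R\<^sup>*\<^sup>* a b"
  proof
    assume "b = c" then show ?thesis using c by simp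
  next
    assume "\<exists>i\<in>I. c \<in> B i \<and> er (T i) c b"
    then obtain i where i: "i \<in> I" "c \<in> B i" "er (T i) c b" by blast
    have "b \<in> B i"
    proof (cases "b = c")
      case True then show ?thesis using i by simp
    next
      case False
      have bV: "b \<in> V i" using er_supp2[OF i(3)] False sub[OF i(1)] by auto
      obtain k where k: "k \<in> I" "b \<in> B k" using b by blast
      show ?thesis
      proof (cases "k = i")
        case True then show ?thesis using k by simp
      next
        case False
        then show ?thesis using disj[OF k(1) i(1) False] k BV bV by blast
      qed
    qed
    then have "?R c b" using i by blast
    then show ?thesis by (rule rtranclp.rtrancl_into_rtrancl[OF c(1)])
  qed
next
  let ?R = "(\<lambda>u v. \<exists>i\<in>I. u \<in> B i \<and> v \<in> B i \<and> er (T i) u v)"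
  assume "?R\<^sup>*\<^sup>* a b"
  then show "er (\<Union>i\<in>I. T i) a b"
  proof (induction rule: rtranclp_induct)
    case base then show ?case by simp
  next
    case (step y z)
    then obtain i where "i \<in> I" "er (T i) y z" by blast
    then have "er (\<Union>i\<in>I. T i) y z" by (auto elim: er_mono[rotated])
    then show ?case using step(3) er_trans by metis
  qed
qed

lemma piece_exit:
  assumes sub: "\<And>i. i\<in>I \<Longrightarrow> \<Union>(T i) \<subseteq> V i"
    and disj: "\<And>i j. i\<in>I \<Longrightarrow> j\<in>I \<Longrightarrow> i\<noteq>j \<Longrightarrow> V i \<inter> V j \<subseteq> B i \<inter> B j"
    and i: "i \<in> I" and x: "x \<in> V i"
    and r: "er (\<Union>i\<in>I. T i) x y"
  shows "er (T i) x y \<or> (\<exists>b\<in>B i. er (T i) x b \<and> er (\<Union>j\<in>I. T j) b y)"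
  using r[unfolded edge_reach_def]
proof (induction rule: rtranclp_induct)
  case base then show ?case by simp
next
  case (step y z)
  from step(2) obtain j where j: "j \<in> I" "{y,z} \<in> T j" by auto
  have yz: "y \<in> V j" "z \<in> V j" using j sub by auto
  have yzU: "er (\<Union>j\<in>I. T j) y z" using j er_edge[of y z] by (auto elim: er_mono[rotated])
  from step(3) show ?case
  proof
    assume h: "er (T i) x y"
    show ?thesis
    proof (cases "j = i")
      case True then show ?thesis using h j er_edge er_trans by metis
    next
      case False
      have "y \<in> V i" using h x er_supp2[OF h] sub[OF i] by (cases "x = y") auto
      then have "y \<in> B i" using disj[OF i j(1)] False yz by blast
      then show ?thesis using h yzU by blast
    qed
  next
    assume "\<exists>b\<in>B i. er (T i) x b \<and> er (\<Union>j\<in>I. T j) b y"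
    then show ?thesis using yzU er_trans by metis
  qed
qed

definition imgE :: "('a \<Rightarrow> 'b) \<Rightarrow> 'a set set \<Rightarrow> 'b set set" where
  "imgE f T = (\<lambda>e. f ` e) ` T"

lemma imgE_Un_supp: "\<Union>(imgE f T) = f ` \<Union>T"
  unfolding imgE_def by auto

lemma er_imgE_fwd: "er T x y \<Longrightarrow> er (imgE f T) (f x) (f y)"
  unfolding edge_reach_def
proof (induction rule: rtranclp_induct)
  case base then show ?case by simp
next
  case (step y z)
  then obtain e where "e \<in> T" "e = {y,z}" by auto
  then have "f ` {y,z} \<in> imgE f T" unfolding imgE_def by blast
  then have "\<exists>e\<in>imgE f T. e = {f y, f z}" by (intro bexI[of _ "f ` {y,z}"]) auto
  then show ?case using step(3) by (simp add: rtranclp.rtrancl_into_rtrancl)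
qed

lemma er_imgE_bwd:
  assumes inj: "inj f" and r: "er (imgE f T) a b"
  shows "\<And>x. a = f x \<Longrightarrow> \<exists>y. b = f y \<and> er T x y"
  using r[unfolded edge_reach_def]
proof (induction rule: rtranclp_induct)
  case base then show ?case by auto
next
  case (step b c)
  then obtain y where y: "b = f y" "er T x y" by blast
  from step(2) obtain e where e: "e \<in> T" "f ` e = {b, c}" unfolding imgE_def by auto
  have "b \<in> f ` e" "c \<in> f ` e" using e by auto
  then obtain u v where uv: "u \<in> e" "v \<in> e" "b = f u" "c = f v" by auto
  have "u = y" using uv y inj by (simp add: inj_eq)
  have "e = {u, v}"
  proof
    show "e \<subseteq> {u,v}"
    proof
      fix w assume "w \<in> e"
      then have "f w \<in> {b,c}" using e by auto
      then show "w \<in> {u,v}" using uv inj by (auto simp: inj_eq)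
    qed
    show "{u,v} \<subseteq> e" using uv by auto
  qed
  then have "er T y v" using e \<open>u = y\<close> er_edge by metis
  then show ?case using y uv by (intro exI[of _ v]) (auto intro: er_trans)
qed

lemma er_imgE:
  assumes "inj f"
  shows "er (imgE f T) (f x) (f y) \<longleftrightarrow> er T x y"
  using er_imgE_fwd er_imgE_bwd[OF assms] by (metis assms inj_eq)

lemma imgE_diff:
  assumes "inj f"
  shows "imgE f T - {f ` e} = imgE f (T - {e})"
proof -
  have i: "inj (image f)" using assms by (simp add: inj_image_eq_iff inj_def)
  show ?thesis unfolding imgE_def using i by (auto simp: inj_eq)
qed

lemma acyc_imgE:
  assumes inj: "inj f"
  shows "acyc (imgE f T) \<longleftrightarrow> acyc T"
proof
  assume A: "acyc (imgE f T)"
  show "acyc T" unfolding acyc_def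
  proof (intro ballI allI impI)
    fix e x y assume e: "e \<in> T" "e = {x,y}"
    have "f ` e \<in> imgE f T" "f ` e = {f x, f y}" using e unfolding imgE_def by (auto intro!: image_eqI[of _ _ e])
    then have "\<not> er (imgE f T - {f ` e}) (f x) (f y)" using A unfolding acyc_def by blast
    then show "\<not> er (T - {e}) x y" using imgE_diff[OF inj] er_imgE[OF inj] by metis
  qed
next
  assume A: "acyc T"
  show "acyc (imgE f T)" unfolding acyc_def
  proof (intro ballI allI impI)
    fix e' X Y assume e': "e' \<in> imgE f T" "e' = {X,Y}"
    then obtain e where e: "e \<in> T" "e' = f ` e" unfolding imgE_def by auto
    have "X \<in> f ` e" "Y \<in> f ` e" using e e' by auto
    then obtain x y where xy: "x \<in> e" "y \<in> e" "X = f x" "Y = f y" by auto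
    have "e = {x,y}"
    proof
      show "e \<subseteq> {x,y}"
      proof
        fix w assume "w \<in> e"
        then have "f w \<in> {X,Y}" using e e' by auto
        then show "w \<in> {x,y}" using xy inj by (auto simp: inj_eq)
      qed
      show "{x,y} \<subseteq> e" using xy by auto
    qed
    then have "\<not> er (T - {e}) x y" using A e unfolding acyc_def by blast
    then show "\<not> er (imgE f T - {e'}) X Y" using imgE_diff[OF inj] er_imgE[OF inj] xy e by metis
  qed
qed


fun padd :: "nat list \<Rightarrow> nat list \<Rightarrow> nat list" where
  "padd [] q = q" | "padd p [] = p" | "padd (a#p) (b#q) = (a+b) # padd p q"

fun peval :: "nat list \<Rightarrow> 'b::comm_semiring_1 \<Rightarrow> 'b" where
  "peval [] x = 0" | "peval (a#p) x = of_nat a + x * peval p x"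

lemma peval_padd: "peval (padd p q) x = peval p x + peval q x"
  by (induction p q rule: padd.induct) (auto simp: algebra_simps)

definition sm :: "nat \<Rightarrow> nat list \<Rightarrow> nat list" where
  "sm t p = (if t = 0 then p else if t \<le> 3 then 0 # p else 0 # 0 # map ((*) 3) p)"

lemma peval_map3: "peval (map ((*) 3) p) x = 3 * peval p x"
  by (induction p) (auto simp: algebra_simps)

definition wt :: "'b::comm_semiring_1 \<Rightarrow> nat \<Rightarrow> 'b" where
  "wt x t = (if t = 0 then 1 else if t \<le> 3 then x else 3 * x^2)"

lemma peval_sm: "peval (sm t p) x = wt x t * peval p x"
  by (auto simp: sm_def wt_def peval_map3 power2_eq_square algebra_simps)

definition merge :: "nat list \<Rightarrow> nat \<Rightarrow> nat \<Rightarrow> nat list" where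
  "merge cl u v = map (\<lambda>x. if x = cl!v then cl!u else x) cl"

fun gens :: "nat \<Rightarrow> nat \<times> nat \<times> nat \<Rightarrow> (nat\<times>nat) list" where
  "gens t (a,b,c) = (if t = 0 then [(a,b),(b,c)] else if t = 1 then [(b,c)] else if t = 2 then [(a,c)] else if t = 3 then [(a,b)] else [])"
fun rels :: "nat \<Rightarrow> nat \<times> nat \<times> nat \<Rightarrow> (nat\<times>nat) list" where
  "rels t (a,b,c) = (if t = 0 then [(a,b),(b,c),(a,c)] else if t = 1 then [(b,c)] else if t = 2 then [(a,c)] else if t = 3 then [(a,b)] else [])"

definition okc where "okc c t cl = list_all (\<lambda>(u,v). cl!u \<noteq> cl!v) (rels t c)"
definition stepc where "stepc c t cl = fold (\<lambda>(u,v) cl. merge cl u v) (gens t c) cl"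

definition cst :: "nat list \<Rightarrow> nat" where
 "cst cl = (let a = cl!0; b = cl!3; c = cl!9 in if a = b \<and> b = c then 0 else if b = c then 1 else if a = c then 2 else if a = b then 3 else 4)"
definition rooted where "rooted cl = list_all (\<lambda>a. cl!a = cl!0 \<or> cl!a = cl!3 \<or> cl!a = cl!9) [0..<10]"

definition vunit :: "nat \<Rightarrow> nat list list" where "vunit k = map (\<lambda>j. if j = k then [1] else []) [0..<5]"
definition vzero :: "nat list list" where "vzero = replicate 5 []"
definition vadd where "vadd v w = map2 padd v w"
definition vscale where "vscale t v = map (sm t) v"

fun W :: "(nat\<times>nat\<times>nat) list \<Rightarrow> nat list \<Rightarrow> nat list list" where
  "W [] cl = (if rooted cl then vunit (cst cl) else vzero)"
| "W (c#cs) cl = foldr (\<lambda>t acc. vadd (if okc c t cl then vscale t (W cs (stepc c t cl)) else vzero) acc) [0..<5] vzero"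

fun goodrec :: "(nat\<times>nat\<times>nat) list \<Rightarrow> nat list \<Rightarrow> nat list \<Rightarrow> nat \<Rightarrow> bool" where
  "goodrec [] ts cl s = (rooted cl \<and> cst cl = s)"
| "goodrec (c#cs) [] cl s = False"
| "goodrec (c#cs) (t#ts) cl s = (okc c t cl \<and> goodrec cs ts (stepc c t cl) s)"

fun Wg :: "('b::comm_semiring_1) \<Rightarrow> nat \<Rightarrow> (nat\<times>nat\<times>nat) list \<Rightarrow> nat list \<Rightarrow> 'b" where
  "Wg x s [] cl = (if rooted cl \<and> cst cl = s then 1 else 0)"
| "Wg x s (c#cs) cl = (\<Sum>t<5. if okc c t cl then wt x t * Wg x s cs (stepc c t cl) else 0)"

definition LSet :: "nat \<Rightarrow> nat list set" where
  "LSet m = {ts. length ts = m \<and> set ts \<subseteq> {..<5}}"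

lemma LSet_Suc: "LSet (Suc m) = (\<lambda>(t,ts). t # ts) ` ({..<5} \<times> LSet m)"
proof -
  have "ts \<in> (\<lambda>(t,ts). t # ts) ` ({..<5} \<times> LSet m)" if "ts \<in> LSet (Suc m)" for ts
    using that unfolding LSet_def by (cases ts) auto
  then show ?thesis unfolding LSet_def by auto
qed

lemma finite_LSet: "finite (LSet m)"
  by (induction m) (auto simp: LSet_Suc, simp add: LSet_def)

lemma Wg_sum: "Wg x s cs cl = (\<Sum>ts\<in>LSet (length cs). if goodrec cs ts cl s then prod_list (map (wt x) ts) else 0)"
proof (induction cs arbitrary: cl)
  case Nil
  have e: "LSet 0 = {[]}" unfolding LSet_def by auto
  show ?case
  proof (cases "rooted cl \<and> cst cl = s")
    case True then show ?thesis by (simp add: e)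
  next
    case False
    then have g: "\<And>ts. goodrec [] ts cl s = False" by simp
    show ?thesis using False by (simp only: g if_False sum.neutral_const Wg.simps)
  qed
next
  case (Cons c cs)
  have inj: "inj_on (\<lambda>(t,ts). t # ts) ({..<5} \<times> LSet (length cs))" by (auto simp: inj_on_def)
  have "(\<Sum>ts\<in>LSet (length (c#cs)). if goodrec (c#cs) ts cl s then prod_list (map (wt x) ts) else 0)
      = (\<Sum>p\<in>{..<5} \<times> LSet (length cs). if goodrec (c#cs) (fst p # snd p) cl s then prod_list (map (wt x) (fst p # snd p)) else 0)"
    by (simp only: length_Cons LSet_Suc, subst sum.reindex[OF inj]) (auto simp: split_beta intro!: sum.cong)
  also have "\<dots> = (\<Sum>t<5. \<Sum>ts\<in>LSet (length cs). if goodrec (c#cs) (t # ts) cl s then prod_list (map (wt x) (t # ts)) else 0)"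
    unfolding sum.cartesian_product by (rule sum.cong) (auto simp: split_beta)
  also have "\<dots> = (\<Sum>t<5. if okc c t cl then wt x t * Wg x s cs (stepc c t cl) else 0)"
    by (rule sum.cong) (auto simp: Cons.IH sum_distrib_left intro!: sum.cong)
  finally show ?case by simp
qed

lemma length_padd: "length (padd p q) = max (length p) (length q)"
  by (induction p q rule: padd.induct) auto

lemma foldr_vadd_len: "(\<And>t. length (F t) = 5) \<Longrightarrow> length (foldr (\<lambda>t. vadd (F t)) ts vzero) = 5"
  by (induction ts) (auto simp: vadd_def vzero_def)

lemma W_len: "length (W cs cl) = 5"
  by (induction cs arbitrary: cl) (simp add: vunit_def vzero_def, simp only: W.simps, rule foldr_vadd_len, auto simp: vscale_def vzero_def)

lemma peval_W: "s < 5 \<Longrightarrow> peval (W cs cl ! s) x = Wg x s cs cl"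
proof (induction cs arbitrary: cl)
  case Nil then show ?case by (auto simp: vunit_def vzero_def)
next
  case (Cons c cs)
  have foldr_nth: "\<And>F::nat\<Rightarrow>nat list list. (\<forall>t. length (F t) = 5) \<Longrightarrow>
     peval (foldr (\<lambda>t acc. vadd (F t) acc) ts vzero ! s) x = (\<Sum>t\<leftarrow>ts. peval (F t ! s) x)" for ts
  proof (induction ts)
    case Nil then show ?case using Cons.prems by (simp add: vzero_def)
  next
    case (Cons t ts)
    have l: "length (foldr (\<lambda>t acc. vadd (F t) acc) ts vzero) = 5"
      using Cons.prems by (induction ts) (auto simp: vadd_def vzero_def)
    show ?case using Cons l \<open>s < 5\<close> by (simp add: vadd_def peval_padd)
  qed
  have "peval (W (c#cs) cl ! s) x = (\<Sum>t\<leftarrow>[0..<5]. peval ((if okc c t cl then vscale t (W cs (stepc c t cl)) else vzero) ! s) x)"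
    by (simp only: W.simps, rule foldr_nth) (auto simp: vscale_def vzero_def W_len)
  also have "\<dots> = (\<Sum>t<5. if okc c t cl then wt x t * Wg x s cs (stepc c t cl) else 0)"
    using Cons \<open>s < 5\<close> by (simp add: sum_list_distinct_conv_sum_set atLeast0LessThan) (rule sum.cong[OF refl], auto simp: vscale_def W_len vzero_def peval_sm)
  finally show ?case by simp
qed

definition cells :: "(nat\<times>nat\<times>nat) list" where
  "cells = [(0,1,4),(1,2,5),(2,3,6),(4,5,7),(5,6,8),(7,8,9)]"


lemma rt_add_pair':
  "(\<lambda>a b. R a b \<or> (a = x \<and> b = y) \<or> (a = y \<and> b = x))\<^sup>*\<^sup>* a b \<longleftrightarrow>
   (R\<^sup>*\<^sup>* a b \<or> (R\<^sup>*\<^sup>* a x \<and> R\<^sup>*\<^sup>* y b) \<or> (R\<^sup>*\<^sup>* a y \<and> R\<^sup>*\<^sup>* x b))"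
proof
  assume "(\<lambda>a b. R a b \<or> (a = x \<and> b = y) \<or> (a = y \<and> b = x))\<^sup>*\<^sup>* a b"
  then show "R\<^sup>*\<^sup>* a b \<or> (R\<^sup>*\<^sup>* a x \<and> R\<^sup>*\<^sup>* y b) \<or> (R\<^sup>*\<^sup>* a y \<and> R\<^sup>*\<^sup>* x b)"
  proof (induction rule: rtranclp_induct)
    case base then show ?case by simp
  next
    case (step b c)
    from step(2) show ?case
    proof (elim disjE)
      assume "R b c"
      then show ?thesis using step(3) by (meson rtranclp.rtrancl_into_rtrancl)
    next
      assume "b = x \<and> c = y" then show ?thesis using step(3) by auto
    next
      assume "b = y \<and> c = x" then show ?thesis using step(3) by auto
    qed
  qed
next
  let ?Q = "(\<lambda>a b. R a b \<or> (a = x \<and> b = y) \<or> (a = y \<and> b = x))"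
  have m: "R\<^sup>*\<^sup>* u v \<Longrightarrow> ?Q\<^sup>*\<^sup>* u v" for u v
    by (erule rtranclp_mono[THEN predicate2D, rotated]) auto
  have xy: "?Q\<^sup>*\<^sup>* x y" "?Q\<^sup>*\<^sup>* y x" by (auto intro: r_into_rtranclp)
  assume "R\<^sup>*\<^sup>* a b \<or> (R\<^sup>*\<^sup>* a x \<and> R\<^sup>*\<^sup>* y b) \<or> (R\<^sup>*\<^sup>* a y \<and> R\<^sup>*\<^sup>* x b)"
  then show "?Q\<^sup>*\<^sup>* a b"
    using m xy by (meson rtranclp_trans)
qed

definition repr :: "(nat \<Rightarrow> nat \<Rightarrow> bool) \<Rightarrow> nat list \<Rightarrow> bool" where
  "repr G cl \<longleftrightarrow> length cl = 10 \<and> (\<forall>a<10. \<forall>b<10. G\<^sup>*\<^sup>* a b \<longleftrightarrow> cl!a = cl!b)"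

lemma repr_merge:
  assumes "repr G cl" "u < 10" "v < 10"
  shows "repr (\<lambda>a b. G a b \<or> (a = u \<and> b = v) \<or> (a = v \<and> b = u)) (merge cl u v)"
  using assms unfolding repr_def rt_add_pair' merge_def by auto

lemma repr_fold:
  assumes "repr G cl" "\<forall>(u,v)\<in>set ps. u < 10 \<and> v < 10"
  shows "repr (\<lambda>a b. G a b \<or> (a,b) \<in> set ps \<or> (b,a) \<in> set ps) (fold (\<lambda>(u,v) cl. merge cl u v) ps cl)"
  using assms
proof (induction ps arbitrary: G cl)
  case Nil then show ?case by simp
next
  case (Cons p ps)
  obtain u v where p: "p = (u,v)" by force
  have r1: "repr (\<lambda>a b. G a b \<or> (a = u \<and> b = v) \<or> (a = v \<and> b = u)) (merge cl u v)"
    using repr_merge Cons.prems p by auto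
  have "repr (\<lambda>a b. (G a b \<or> (a = u \<and> b = v) \<or> (a = v \<and> b = u)) \<or> (a,b) \<in> set ps \<or> (b,a) \<in> set ps)
     (fold (\<lambda>(u,v) cl. merge cl u v) ps (merge cl u v))"
    using Cons.IH[OF r1] Cons.prems by auto
  moreover have "(\<lambda>a b. (G a b \<or> (a = u \<and> b = v) \<or> (a = v \<and> b = u)) \<or> (a,b) \<in> set ps \<or> (b,a) \<in> set ps)
     = (\<lambda>a b. G a b \<or> (a,b) \<in> set (p#ps) \<or> (b,a) \<in> set (p#ps))"
    using p by (auto intro!: ext)
  ultimately show ?case using p by simp
qed

definition Rgen :: "nat \<Rightarrow> nat \<times> nat \<times> nat \<Rightarrow> nat \<Rightarrow> nat \<Rightarrow> bool" where
  "Rgen t c a b \<longleftrightarrow> (a,b) \<in> set (gens t c) \<or> (b,a) \<in> set (gens t c)"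

lemma repr_stepc:
  assumes "repr G cl" "c = (x,y,z)" "x < 10" "y < 10" "z < 10"
  shows "repr (\<lambda>a b. G a b \<or> Rgen t c a b) (stepc c t cl)"
proof -
  have "\<forall>(u,v)\<in>set (gens t c). u < 10 \<and> v < 10" using assms(2-5) by auto
  from repr_fold[OF assms(1) this] show ?thesis unfolding stepc_def Rgen_def by simp
qed

definition cls_of :: "nat list \<Rightarrow> nat \<Rightarrow> nat list" where
  "cls_of ts k = fold (\<lambda>j cl. stepc (cells!j) (ts!j) cl) [0..<k] [0..<10]"

definition SG :: "nat list \<Rightarrow> nat \<Rightarrow> nat \<Rightarrow> nat \<Rightarrow> bool" where
  "SG ts k a b \<longleftrightarrow> (\<exists>j<k. Rgen (ts!j) (cells!j) a b)"

lemma cells_lt: "j < 6 \<Longrightarrow> \<exists>x y z. cells!j = (x,y,z) \<and> x < 10 \<and> y < 10 \<and> z < 10"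
  unfolding cells_def by (auto simp: less_Suc_eq nth_Cons')

lemma repr_cls: "k \<le> 6 \<Longrightarrow> repr (SG ts k) (cls_of ts k)"
proof (induction k)
  case 0
  have "(\<lambda>a b. False)\<^sup>*\<^sup>* a b \<longleftrightarrow> a = b" for a b :: nat
    by (metis (full_types) rtranclp.rtrancl_refl converse_rtranclpE)
  then show ?case by (simp add: repr_def cls_of_def SG_def)
next
  case (Suc k)
  have "k < 6" using Suc.prems by simp
  then obtain x y z where c: "cells!k = (x,y,z)" "x < 10" "y < 10" "z < 10" using cells_lt by blast
  have "repr (\<lambda>a b. SG ts k a b \<or> Rgen (ts!k) (cells!k) a b) (stepc (cells!k) (ts!k) (cls_of ts k))"
    using repr_stepc[OF Suc.IH c] Suc.prems by simp
  moreover have "(\<lambda>a b. SG ts k a b \<or> Rgen (ts!k) (cells!k) a b) = SG ts (Suc k)"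
    by (auto simp: SG_def less_Suc_eq intro!: ext)
  ultimately show ?case by (simp add: cls_of_def)
qed

lemma cls_of_Suc: "cls_of ts (Suc k) = stepc (cells!k) (ts!k) (cls_of ts k)"
  by (simp add: cls_of_def)

lemma goodrec_drop:
  assumes "length ts = 6" "k \<le> 6"
  shows "goodrec (drop k cells) (drop k ts) (cls_of ts k) s \<longleftrightarrow>
     (\<forall>j\<in>{k..<6}. okc (cells!j) (ts!j) (cls_of ts j)) \<and> rooted (cls_of ts 6) \<and> cst (cls_of ts 6) = s"
  using assms(2)
proof (induction "6 - k" arbitrary: k)
  case 0
  then have "k = 6" by simp
  then show ?case using assms by (simp add: cells_def)
next
  case (Suc m)
  then have k: "k < 6" by simp
  have lc: "length cells = 6" by (simp add: cells_def)
  have d1: "drop k cells = cells!k # drop (Suc k) cells" using k lc by (simp add: Cons_nth_drop_Suc)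
  have d2: "drop k ts = ts!k # drop (Suc k) ts" using k assms(1) by (simp add: Cons_nth_drop_Suc)
  have IH: "goodrec (drop (Suc k) cells) (drop (Suc k) ts) (cls_of ts (Suc k)) s \<longleftrightarrow>
     (\<forall>j\<in>{Suc k..<6}. okc (cells!j) (ts!j) (cls_of ts j)) \<and> rooted (cls_of ts 6) \<and> cst (cls_of ts 6) = s"
    using Suc.hyps(1)[of "Suc k"] Suc.hyps(2) k by simp
  have "{k..<6} = insert k {Suc k..<6}" using k by auto
  then show ?case using IH by (simp add: d1 d2 cls_of_Suc)
qed

definition good :: "nat list \<Rightarrow> nat \<Rightarrow> bool" where
  "good ts s \<longleftrightarrow> (\<forall>j<6. okc (cells!j) (ts!j) (cls_of ts j)) \<and> rooted (cls_of ts 6) \<and> cst (cls_of ts 6) = s"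

lemma goodrec_good: "length ts = 6 \<Longrightarrow> goodrec cells ts [0..<10] s \<longleftrightarrow> good ts s"
  using goodrec_drop[of ts 0 s] by (simp add: cls_of_def good_def atLeast0LessThan lessThan_def)


definition rforest :: "'a set \<Rightarrow> 'a set set \<Rightarrow> 'a set \<Rightarrow> 'a set set \<Rightarrow> bool" where
  "rforest V E B T \<longleftrightarrow> T \<subseteq> E \<and> acyc T \<and> (\<forall>x\<in>V. \<exists>b\<in>B. er T x b)"

definition sp :: "nat \<Rightarrow> nat \<Rightarrow> nat \<Rightarrow> bool" where
  "sp t i j \<longleftrightarrow> i = j \<or> t = 0 \<or> ({i,j} = {0,1} \<and> t = 3) \<or> ({i,j} = {1,2} \<and> t = 1) \<or> ({i,j} = {0,2} \<and> t = 2)"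

lemma less3: "k < (3::nat) \<longleftrightarrow> k = 0 \<or> k = 1 \<or> k = 2" by auto
lemma less6: "k < (6::nat) \<longleftrightarrow> k = 0 \<or> k = 1 \<or> k = 2 \<or> k = 3 \<or> k = 4 \<or> k = 5" by auto
lemma less10: "k < (10::nat) \<longleftrightarrow> k = 0 \<or> k = 1 \<or> k = 2 \<or> k = 3 \<or> k = 4 \<or> k = 5 \<or> k = 6 \<or> k = 7 \<or> k = 8 \<or> k = 9" by auto

definition stOK :: "(nat \<Rightarrow> 'a) \<Rightarrow> nat \<Rightarrow> 'a set set \<Rightarrow> bool" where
  "stOK q t T \<longleftrightarrow> (\<forall>i<3. \<forall>j<3. er T (q i) (q j) \<longleftrightarrow> sp t i j)"

lemma stOK_ex: "\<exists>t<5. stOK q t T"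
proof -
  let ?a = "er T (q 0) (q 1)" and ?b = "er T (q 1) (q 2)" and ?c = "er T (q 0) (q 2)"
  have s: "er T (q i) (q j) \<longleftrightarrow> er T (q j) (q i)" for i j using er_sym by metis
  have tr1: "?a \<Longrightarrow> ?b \<Longrightarrow> ?c" using er_trans[of T "q 0" "q 1" "q 2"] by blast
  have tr2: "?a \<Longrightarrow> ?c \<Longrightarrow> ?b" using er_trans[of T "q 1" "q 0" "q 2"] er_sym[of T "q 0" "q 1"] by blast
  have tr3: "?b \<Longrightarrow> ?c \<Longrightarrow> ?a" using er_trans[of T "q 0" "q 2" "q 1"] er_sym[of T "q 1" "q 2"] by blast
  have all3: "(\<forall>i<(3::nat). P i) \<longleftrightarrow> P 0 \<and> P 1 \<and> P 2" for P by (auto simp: less3)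
  have sy: "er T (q 1) (q 0) \<longleftrightarrow> ?a" "er T (q 2) (q 1) \<longleftrightarrow> ?b" "er T (q 2) (q 0) \<longleftrightarrow> ?c"
    using er_sym by metis+
  let ?t = "(if ?a \<and> ?b then 0 else if ?b then 1 else if ?c then 2 else if ?a then 3 else 4)::nat"
  have "stOK q ?t T"
    unfolding stOK_def all3 sp_def sy using tr1 tr2 tr3
    by (cases ?a; cases ?b; cases ?c) (simp_all add: doubleton_eq_iff)
  moreover have "?t < 5" by auto
  ultimately show ?thesis by blast
qed

lemma stOK_uniq: "stOK q t T \<Longrightarrow> stOK q t' T \<Longrightarrow> t < 5 \<Longrightarrow> t' < 5 \<Longrightarrow> t = t'"
proof -
  assume a: "stOK q t T" "stOK q t' T" "t < 5" "t' < 5"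
  have "sp t i j \<longleftrightarrow> sp t' i j" if "i < 3" "j < 3" for i j using a that unfolding stOK_def by blast
  from this[of 0 1] this[of 1 2] this[of 0 2] a(3,4) show "t = t'"
    unfolding sp_def by (auto simp: doubleton_eq_iff)
qed

definition cc :: "nat \<Rightarrow> nat \<Rightarrow> nat" where
  "cc k i = (case cells ! k of (a,b,c) \<Rightarrow> if i = 0 then a else if i = 1 then b else c)"

definition cset :: "nat \<Rightarrow> nat set" where
  "cset k = {cc k 0, cc k 1, cc k 2}"

lemma cc_lt: "k < 6 \<Longrightarrow> cc k i < 10"
  unfolding less6 by (auto simp: cc_def cells_def)

lemma cc_inj: "k < 6 \<Longrightarrow> i < 3 \<Longrightarrow> j < 3 \<Longrightarrow> cc k i = cc k j \<longleftrightarrow> i = j"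
  unfolding less6 less3 by (auto simp: cc_def cells_def)

lemma cells_cc: "k < 6 \<Longrightarrow> cells ! k = (cc k 0, cc k 1, cc k 2)"
  unfolding less6 by (auto simp: cc_def cells_def)

lemma cset_cover: "a < 10 \<Longrightarrow> \<exists>k<6. a \<in> cset k"
proof -
  assume "a < 10"
  then have "a \<in> cset 0 \<or> a \<in> cset 1 \<or> a \<in> cset 2 \<or> a \<in> cset 3 \<or> a \<in> cset 4 \<or> a \<in> cset 5"
    unfolding less10 by (auto simp: cset_def cc_def cells_def)
  then show ?thesis
    by (elim disjE) (rule exI, rule conjI[rotated], assumption, simp)+
qed

lemma cset_vals: "cset 0 = {0,1,4}" "cset 1 = {1,2,5}" "cset 2 = {2,3,6}" "cset 3 = {4,5,7}" "cset 4 = {5,6,8}" "cset 5 = {7,8,9}" "cset (Suc 0) = {1,2,5}"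
  by (simp_all add: cset_def cc_def cells_def)

lemma cset_inter: "k < 6 \<Longrightarrow> k' < 6 \<Longrightarrow> k \<noteq> k' \<Longrightarrow> u \<in> cset k \<Longrightarrow> u \<in> cset k' \<Longrightarrow> v \<in> cset k \<Longrightarrow> v \<in> cset k' \<Longrightarrow> u = v"
proof -
  assume a: "k < 6" "k' < 6" "k \<noteq> k'" "u \<in> cset k" "u \<in> cset k'" "v \<in> cset k" "v \<in> cset k'"
  have "card (cset k \<inter> cset k') \<le> 1"
    using a(1-3) unfolding less6 by (elim disjE; simp add: cset_vals)
  moreover have "u \<in> cset k \<inter> cset k'" "v \<in> cset k \<inter> cset k'" using a by auto
  moreover have "finite (cset k \<inter> cset k')" by (simp add: cset_def)
  ultimately show "u = v" by (metis card_le_Suc0_iff_eq One_nat_def)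
qed

lemma cset_corners: "0 \<in> cset 0" "3 \<in> cset 2" "9 \<in> cset 5"
  by (auto simp: cset_def cc_def cells_def)


lemma imgE_inj: "inj f \<Longrightarrow> inj (imgE f)"
proof -
  assume i: "inj f"
  have i2: "inj (image f)" using i by (simp add: inj_image_eq_iff inj_def)
  show "inj (imgE f)" unfolding imgE_def using i2 by (simp add: inj_image_eq_iff inj_def)
qed

lemma imgE_sub_iff: "inj f \<Longrightarrow> imgE f T \<subseteq> imgE f E \<longleftrightarrow> T \<subseteq> E"
proof -
  assume i: "inj f"
  have i2: "inj (image f)" using i by (simp add: inj_image_eq_iff inj_def)
  show ?thesis unfolding imgE_def using i2 by (simp add: inj_image_subset_iff)
qed

lemma imgE_surj: "T' \<subseteq> imgE f E \<Longrightarrow> \<exists>T\<subseteq>E. T' = imgE f T"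
proof -
  assume a: "T' \<subseteq> imgE f E"
  let ?T = "{e\<in>E. f ` e \<in> T'}"
  have "T' = imgE f ?T" using a unfolding imgE_def by auto
  moreover have "?T \<subseteq> E" by blast
  ultimately show ?thesis by (intro exI[of _ ?T] conjI)
qed

lemma rforest_imgE:
  assumes i: "inj f"
  shows "rforest (f ` V) (imgE f E) (f ` B) (imgE f T) \<longleftrightarrow> rforest V E B T"
proof -
  have r: "(\<forall>X\<in>f ` V. \<exists>Y\<in>f ` B. er (imgE f T) X Y) \<longleftrightarrow> (\<forall>x\<in>V. \<exists>b\<in>B. er T x b)"
    using er_imgE[OF i] by auto
  show ?thesis by (simp only: rforest_def r imgE_sub_iff[OF i] acyc_imgE[OF i])
qed

lemma stOK_imgE: "inj f \<Longrightarrow> stOK (f \<circ> q) t (imgE f T) \<longleftrightarrow> stOK q t T"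
  unfolding stOK_def using er_imgE by fastforce

lemma rt_transfer:
  assumes dom: "\<And>u v. R u v \<Longrightarrow> u \<in> lab ` L \<and> v \<in> lab ` L"
    and inj: "inj_on lab L" and a: "a \<in> L" and b: "b \<in> L"
  shows "R\<^sup>*\<^sup>* (lab a) (lab b) \<longleftrightarrow> (\<lambda>u v. u \<in> L \<and> v \<in> L \<and> R (lab u) (lab v))\<^sup>*\<^sup>* a b"
proof
  let ?Q = "(\<lambda>u v. u \<in> L \<and> v \<in> L \<and> R (lab u) (lab v))"
  assume "R\<^sup>*\<^sup>* (lab a) (lab b)"
  then have "\<exists>c\<in>L. lab b = lab c \<and> ?Q\<^sup>*\<^sup>* a c"
  proof (induction rule: rtranclp_induct)
    case base then show ?case using a by blast
  next
    case (step y z)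
    then obtain c where c: "c \<in> L" "y = lab c" "?Q\<^sup>*\<^sup>* a c" by blast
    obtain d where d: "d \<in> L" "z = lab d" using dom[OF step(2)] by blast
    have "?Q c d" using c d step(2) by blast
    then have "?Q\<^sup>*\<^sup>* a d" using c(3) by (simp add: rtranclp.rtrancl_into_rtrancl)
    then show ?case using d by blast
  qed
  then obtain c where c: "c \<in> L" "lab b = lab c" "?Q\<^sup>*\<^sup>* a c" by blast
  have "b = c" using inj_onD[OF inj c(2)[symmetric] c(1) b] by simp
  then show "?Q\<^sup>*\<^sup>* a b" using c(3) by simp
next
  let ?Q = "(\<lambda>u v. u \<in> L \<and> v \<in> L \<and> R (lab u) (lab v))"
  assume "?Q\<^sup>*\<^sup>* a b"
  then show "R\<^sup>*\<^sup>* (lab a) (lab b)"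
  proof (induction rule: rtranclp_induct)
    case base then show ?case by simp
  next
    case (step y z)
    then show ?case by (meson rtranclp.rtrancl_into_rtrancl)
  qed
qed

lemma rt_eq:
  assumes "\<And>u v. R1 u v \<Longrightarrow> R2 u v" "\<And>u v. R2 u v \<Longrightarrow> R1\<^sup>*\<^sup>* u v"
  shows "R1\<^sup>*\<^sup>* a b \<longleftrightarrow> R2\<^sup>*\<^sup>* a b"
proof
  assume "R1\<^sup>*\<^sup>* a b" then show "R2\<^sup>*\<^sup>* a b"
    by (rule rtranclp_mono[THEN predicate2D, rotated]) (use assms(1) in blast)
next
  assume "R2\<^sup>*\<^sup>* a b"
  then have "(R1\<^sup>*\<^sup>*)\<^sup>*\<^sup>* a b"
    by (rule rtranclp_mono[THEN predicate2D, rotated]) (use assms(2) in blast)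
  then show "R1\<^sup>*\<^sup>* a b" by simp
qed

lemma rt_nodom: "R\<^sup>*\<^sup>* a b \<Longrightarrow> (\<And>v. \<not> R a v) \<Longrightarrow> a = b"
  by (erule converse_rtranclpE) auto

definition Rst :: "nat \<Rightarrow> nat \<Rightarrow> nat \<Rightarrow> nat \<Rightarrow> bool" where
  "Rst t k u v \<longleftrightarrow> (\<exists>i<3. \<exists>j<3. u = cc k i \<and> v = cc k j \<and> sp t i j)"

lemma Rgen_Rst: "k < 6 \<Longrightarrow> Rgen t (cells!k) u v \<Longrightarrow> Rst t k u v"
proof -
  assume k: "k < 6" and g: "Rgen t (cells!k) u v"
  have R: "\<And>t' i j. i<3 \<Longrightarrow> j<3 \<Longrightarrow> sp t' i j \<Longrightarrow> Rst t' k (cc k i) (cc k j)" unfolding Rst_def by blast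
  from g show ?thesis unfolding Rgen_def cells_cc[OF k]
    by (auto split: if_splits intro!: R simp: sp_def)
qed

lemma Rst_Rgen: "k < 6 \<Longrightarrow> Rst t k u v \<Longrightarrow> (Rgen t (cells!k))\<^sup>*\<^sup>* u v"
proof -
  assume k: "k < 6" and r: "Rst t k u v"
  then obtain i j where ij: "i < 3" "j < 3" "u = cc k i" "v = cc k j" "sp t i j" unfolding Rst_def by blast
  let ?R = "Rgen t (cells!k)"
  have c: "cells ! k = (cc k 0, cc k 1, cc k 2)" using cells_cc[OF k] .
  have g: "?R a b \<longleftrightarrow> (a,b) \<in> set (gens t (cc k 0, cc k 1, cc k 2)) \<or> (b,a) \<in> set (gens t (cc k 0, cc k 1, cc k 2))" for a b
    unfolding Rgen_def c ..
  have e01: "t = 0 \<or> t = 3 \<Longrightarrow> ?R (cc k 0) (cc k 1) \<and> ?R (cc k 1) (cc k 0)" unfolding g by auto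
  have e12: "t = 0 \<or> t = 1 \<Longrightarrow> ?R (cc k 1) (cc k 2) \<and> ?R (cc k 2) (cc k 1)" unfolding g by auto
  have e02: "t = 2 \<Longrightarrow> ?R (cc k 0) (cc k 2) \<and> ?R (cc k 2) (cc k 0)" unfolding g by auto
  have t02: "t = 0 \<Longrightarrow> ?R\<^sup>*\<^sup>* (cc k 0) (cc k 2) \<and> ?R\<^sup>*\<^sup>* (cc k 2) (cc k 0)"
    using e01 e12 by (meson r_into_rtranclp rtranclp_trans)
  from ij(1,2,5) show ?thesis unfolding ij(3,4) sp_def less3
    using e01 e12 e02 t02 by (auto simp: doubleton_eq_iff)
qed

locale frame =
  fixes V :: "'a set" and E :: "'a set set" and p :: "nat \<Rightarrow> 'a" and F :: "nat \<Rightarrow> 'a \<Rightarrow> 'a" and lab :: "nat \<Rightarrow> 'a"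
  assumes injF: "\<And>k. k < 6 \<Longrightarrow> inj (F k)"
    and lab_inj: "inj_on lab {..<10}"
    and F_corner: "\<And>k i. k < 6 \<Longrightarrow> i < 3 \<Longrightarrow> F k (p i) = lab (cc k i)"
    and EV: "\<Union>E \<subseteq> V" and pV: "\<And>i. i < 3 \<Longrightarrow> p i \<in> V" and finE: "finite E"
    and E2: "\<And>e. e \<in> E \<Longrightarrow> \<exists>x y. x \<noteq> y \<and> e = {x,y}"
    and disjV: "\<And>k k'. k<6 \<Longrightarrow> k'<6 \<Longrightarrow> k \<noteq> k' \<Longrightarrow> F k ` V \<inter> F k' ` V \<subseteq> F k ` p ` {..<3}"
    and p_lab: "p 0 = lab 0" "p 1 = lab 3" "p 2 = lab 9"
begin

definition "Vk k = F k ` V"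
definition "Ek k = imgE (F k) E"
definition "Bk k = F k ` p ` {..<3}"
definition "V' = (\<Union>k<6. Vk k)"
definition "E' = (\<Union>k<6. Ek k)"
definition "P0 = p ` {..<3}"

lemma Bk_lab: "k < 6 \<Longrightarrow> Bk k = lab ` cset k"
proof -
  assume k: "k < 6"
  have "Bk k = (\<lambda>i. F k (p i)) ` {..<3}" unfolding Bk_def by auto
  also have "\<dots> = (\<lambda>i. lab (cc k i)) ` {..<3}" using F_corner[OF k] by auto
  also have "\<dots> = lab ` cset k" unfolding cset_def by (auto simp: less3)
  finally show ?thesis .
qed

lemma cset_lt: "k < 6 \<Longrightarrow> cset k \<subseteq> {..<10}"
  unfolding cset_def using cc_lt by auto

lemma BV: "Bk k \<subseteq> Vk k"
  unfolding Bk_def Vk_def using pV by auto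

lemma disjV': "k<6 \<Longrightarrow> k'<6 \<Longrightarrow> k \<noteq> k' \<Longrightarrow> Vk k \<inter> Vk k' \<subseteq> Bk k \<inter> Bk k'"
  unfolding Vk_def Bk_def using disjV by blast

lemma EkV: "\<Union>(Ek k) \<subseteq> Vk k"
  unfolding Ek_def Vk_def imgE_Un_supp using EV by auto

lemma lab_in_Vk: "k < 6 \<Longrightarrow> a < 10 \<Longrightarrow> lab a \<in> Vk k \<Longrightarrow> a \<in> cset k"
proof -
  assume k: "k < 6" and a: "a < 10" and l: "lab a \<in> Vk k"
  obtain k' where k': "k' < 6" "a \<in> cset k'" using cset_cover[OF a] by blast
  show "a \<in> cset k"
  proof (cases "k' = k")
    case True then show ?thesis using k' by simp
  next
    case False
    have "lab a \<in> Vk k'" using k' BV Bk_lab by blast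
    then have "lab a \<in> Bk k" using disjV'[OF k k'(1)] False l by blast
    then obtain b where b: "b \<in> cset k" "lab a = lab b" using Bk_lab[OF k] by auto
    have "b < 10" using b cset_lt[OF k] by auto
    then show ?thesis using b a lab_inj by (metis inj_onD lessThan_iff)
  qed
qed

lemma Bk_inter: "k < 6 \<Longrightarrow> k' < 6 \<Longrightarrow> X \<in> Bk k \<inter> Bk k' \<Longrightarrow> \<exists>u. u \<in> cset k \<and> u \<in> cset k' \<and> X = lab u"
proof -
  assume k: "k < 6" "k' < 6" and X: "X \<in> Bk k \<inter> Bk k'"
  obtain u where u: "u \<in> cset k" "X = lab u" using X Bk_lab[OF k(1)] by auto
  obtain u' where u': "u' \<in> cset k'" "X = lab u'" using X Bk_lab[OF k(2)] by auto
  have "u < 10" "u' < 10" using u u' cset_lt k by auto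
  then have "u = u'" using u u' lab_inj by (metis inj_onD lessThan_iff)
  then show ?thesis using u u' by blast
qed

lemma Ek_disj: "k<6 \<Longrightarrow> k'<6 \<Longrightarrow> k \<noteq> k' \<Longrightarrow> Ek k \<inter> Ek k' = {}"
proof (rule ccontr)
  assume k: "k<6" "k'<6" "k \<noteq> k'" and ne: "Ek k \<inter> Ek k' \<noteq> {}"
  then obtain e where e: "e \<in> Ek k" "e \<in> Ek k'" by blast
  then obtain e0 where e0: "e0 \<in> E" "e = F k ` e0" unfolding Ek_def imgE_def by auto
  then obtain x y where xy: "x \<noteq> y" "e0 = {x,y}" using E2 by blast
  have ne2: "F k x \<noteq> F k y" using xy injF[OF k(1)] by (simp add: inj_eq)
  have "F k x \<in> Vk k \<inter> Vk k'" "F k y \<in> Vk k \<inter> Vk k'"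
    using e e0 xy EkV[of k] EkV[of k'] by auto
  then have "F k x \<in> Bk k \<inter> Bk k'" "F k y \<in> Bk k \<inter> Bk k'" using disjV'[OF k] by auto
  then obtain u v where uv: "u \<in> cset k" "u \<in> cset k'" "v \<in> cset k" "v \<in> cset k'" "F k x = lab u" "F k y = lab v"
    using Bk_inter[OF k(1,2)] by metis
  have "u = v" using cset_inter[OF k] uv by blast
  then show False using ne2 uv by simp
qed

lemma finite_Ek: "finite (Ek k)"
  unfolding Ek_def imgE_def using finE by simp

lemma Bk_fin: "finite (Bk k)" "card (Bk k) \<le> 3"
proof -
  show "finite (Bk k)" unfolding Bk_def by simp
  have "card (Bk k) \<le> card (p ` {..<3})" unfolding Bk_def by (rule card_image_le) simp
  also have "\<dots> \<le> card {..<3::nat}" by (rule card_image_le) simp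
  finally show "card (Bk k) \<le> 3" by simp
qed

definition RF :: "nat \<Rightarrow> 'a set set set" where
  "RF t = {T. rforest V E P0 T \<and> stOK p t T}"
definition RFk :: "nat \<Rightarrow> nat \<Rightarrow> 'a set set set" where
  "RFk k t = {T. rforest (Vk k) (Ek k) (Bk k) T \<and> stOK (F k \<circ> p) t T}"
definition RF' :: "nat \<Rightarrow> 'a set set set" where
  "RF' s = {T. rforest V' E' P0 T \<and> stOK p s T}"

lemma RFk_eq: "k < 6 \<Longrightarrow> RFk k t = imgE (F k) ` RF t"
proof -
  assume k: "k < 6"
  note i = injF[OF k]
  have "T' \<in> imgE (F k) ` RF t" if "T' \<in> RFk k t" for T'
  proof -
    have "T' \<subseteq> imgE (F k) E" using that unfolding RFk_def rforest_def Ek_def by blast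
    then obtain T where T: "T \<subseteq> E" "T' = imgE (F k) T" using imgE_surj[of T' "F k" E] by blast
    have "rforest V E P0 T \<and> stOK p t T"
      using that T rforest_imgE[OF i, of V E P0 T] stOK_imgE[OF i, of p t T]
      unfolding RFk_def Vk_def Ek_def Bk_def P0_def by (simp del: image_image)
    then show ?thesis using T unfolding RF_def by blast
  qed
  moreover have "imgE (F k) T \<in> RFk k t" if "T \<in> RF t" for T
    using that rforest_imgE[OF i, of V E P0 T] stOK_imgE[OF i, of p t T]
    unfolding RFk_def RF_def Vk_def Ek_def Bk_def P0_def by (simp del: image_image)
  ultimately show ?thesis by blast
qed

lemma card_RFk: "k < 6 \<Longrightarrow> card (RFk k t) = card (RF t)"
  using RFk_eq card_image imgE_inj injF by (metis inj_on_subset subset_UNIV)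

lemma finite_RF: "finite (RF t)"
proof -
  have "RF t \<subseteq> Pow E" unfolding RF_def rforest_def by auto
  then show ?thesis using finE by (meson finite_Pow_iff finite_subset)
qed

lemma finite_RFk: "k < 6 \<Longrightarrow> finite (RFk k t)"
  using RFk_eq finite_RF by simp

end


lemma all3: "(\<forall>i<(3::nat). P i) \<longleftrightarrow> P 0 \<and> P 1 \<and> P 2" by (auto simp: less3)

lemma rt_nodom2: "R\<^sup>*\<^sup>* a b \<Longrightarrow> (\<And>u. \<not> R u b) \<Longrightarrow> a = b"
  by (erule rtranclp.cases) auto

lemma okc_iff:
  assumes k: "k < 6"
  shows "okc (cells!k) t cl \<longleftrightarrow> (\<forall>i<3. \<forall>j<3. sp t i j \<longrightarrow> cl!(cc k i) = cl!(cc k j) \<longrightarrow> i = j)"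
proof -
  have c: "cells ! k = (cc k 0, cc k 1, cc k 2)" using cells_cc[OF k] .
  consider "t = 0" | "t = 1" | "t = 2" | "t = 3" | "t \<ge> 4" by linarith
  then show ?thesis
    unfolding okc_def c all3 sp_def by cases (auto simp: doubleton_eq_iff)
qed

definition pl :: "nat \<Rightarrow> nat" where "pl i = (if i = 0 then 0 else if i = 1 then 3 else 9)"

lemma cst_iff:
  assumes s: "s < 5"
  shows "cst cl = s \<longleftrightarrow> (\<forall>i<3. \<forall>j<3. cl!(pl i) = cl!(pl j) \<longleftrightarrow> sp s i j)"
proof -
  consider "s = 0" | "s = 1" | "s = 2" | "s = 3" | "s = 4" using s by linarith
  then show ?thesis
    unfolding cst_def Let_def all3 sp_def pl_def by cases (auto simp: doubleton_eq_iff)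
qed

lemma rooted_iff: "rooted cl \<longleftrightarrow> (\<forall>a<10. cl!a = cl!0 \<or> cl!a = cl!3 \<or> cl!a = cl!9)"
  unfolding rooted_def list_all_iff by auto

context frame
begin

lemma lab_Bk: "k < 6 \<Longrightarrow> u < 10 \<Longrightarrow> lab u \<in> Bk k \<longleftrightarrow> u \<in> cset k"
proof -
  assume k: "k < 6" and u: "u < 10"
  show ?thesis
  proof
    assume "lab u \<in> Bk k"
    then obtain y where y: "y \<in> cset k" "lab u = lab y" using Bk_lab[OF k] by auto
    have "y < 10" using y cset_lt k by auto
    then have "u = y" using y u inj_onD[OF lab_inj y(2)] by auto
    then show "u \<in> cset k" using y by simp
  next
    assume "u \<in> cset k" then show "lab u \<in> Bk k" using Bk_lab[OF k] by auto
  qed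
qed

definition Tk :: "'a set set \<Rightarrow> nat \<Rightarrow> 'a set set" where "Tk T k = T \<inter> Ek k"

lemma T_union: "T \<subseteq> E' \<Longrightarrow> T = (\<Union>k\<in>{..<6}. Tk T k)"
  unfolding Tk_def E'_def by auto

lemma er_lab:
  assumes K: "K \<subseteq> {..<6}" and st: "\<And>k. k \<in> K \<Longrightarrow> stOK (F k \<circ> p) (ts!k) (TT k)"
    and sub: "\<And>k. k\<in>K \<Longrightarrow> TT k \<subseteq> Ek k" and a: "a < 10" and b: "b < 10"
  shows "er (\<Union>k\<in>K. TT k) (lab a) (lab b) \<longleftrightarrow> (\<lambda>u v. \<exists>k\<in>K. Rst (ts!k) k u v)\<^sup>*\<^sup>* a b"
proof -
  let ?J = "\<Union>k\<in>K. Bk k"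
  let ?S = "\<lambda>u v. \<exists>k\<in>K. Rst (ts!k) k u v"
  have supT: "\<And>k. k \<in> K \<Longrightarrow> \<Union>(TT k) \<subseteq> Vk k" using sub EkV by blast
  have Kk: "k \<in> K \<Longrightarrow> k < 6" for k using K by auto
  have lab_J: "lab x \<in> ?J \<longleftrightarrow> (\<exists>k\<in>K. x \<in> cset k)" if "x < 10" for x
  proof
    assume "lab x \<in> ?J"
    then obtain k y where k: "k \<in> K" "y \<in> cset k" "lab x = lab y" using Bk_lab Kk by auto
    have "y < 10" using k cset_lt Kk by auto
    then have "x = y" using k that lab_inj by (metis inj_onD lessThan_iff)
    then show "\<exists>k\<in>K. x \<in> cset k" using k by blast
  next
    assume "\<exists>k\<in>K. x \<in> cset k"
    then show "lab x \<in> ?J" using Bk_lab Kk by auto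
  qed
  have notJ: "lab x \<notin> \<Union>(\<Union>k\<in>K. TT k)" if "x < 10" "lab x \<notin> ?J" for x
  proof
    assume "lab x \<in> \<Union>(\<Union>k\<in>K. TT k)"
    then obtain k where k: "k \<in> K" "lab x \<in> \<Union>(TT k)" by blast
    then have "lab x \<in> Vk k" using supT by blast
    then have "x \<in> cset k" using lab_in_Vk Kk k that(1) by blast
    then show False using that lab_J k by blast
  qed
  have Sdom: "?S u v \<Longrightarrow> (\<exists>k\<in>K. u \<in> cset k) \<and> (\<exists>k\<in>K. v \<in> cset k)" for u v
    unfolding Rst_def cset_def by (auto simp: less3)
  have Rst_er: "Rst (ts!k) k u v \<longleftrightarrow> u \<in> cset k \<and> v \<in> cset k \<and> er (TT k) (lab u) (lab v)" if k: "k \<in> K" for k u v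
  proof
    assume "Rst (ts!k) k u v"
    then obtain i j where ij: "i<3" "j<3" "u = cc k i" "v = cc k j" "sp (ts!k) i j" unfolding Rst_def by blast
    have "er (TT k) (F k (p i)) (F k (p j))" using st[OF k] ij unfolding stOK_def by auto
    then show "u \<in> cset k \<and> v \<in> cset k \<and> er (TT k) (lab u) (lab v)"
      using ij F_corner Kk[OF k] unfolding cset_def by (auto simp: less3)
  next
    assume h: "u \<in> cset k \<and> v \<in> cset k \<and> er (TT k) (lab u) (lab v)"
    then obtain i j where ij: "i<3" "j<3" "u = cc k i" "v = cc k j" unfolding cset_def by (auto simp: less3)
    have "er (TT k) (F k (p i)) (F k (p j))" using h ij F_corner Kk[OF k] by simp
    then have "sp (ts!k) i j" using st[OF k] ij unfolding stOK_def by auto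
    then show "Rst (ts!k) k u v" using ij unfolding Rst_def by blast
  qed
  show ?thesis
  proof (cases "lab a \<in> ?J \<and> lab b \<in> ?J")
    case True
    let ?R = "\<lambda>u v. \<exists>k\<in>K. u \<in> Bk k \<and> v \<in> Bk k \<and> er (TT k) u v"
    have sk: "er (\<Union>k\<in>K. TT k) (lab a) (lab b) \<longleftrightarrow> ?R\<^sup>*\<^sup>* (lab a) (lab b)"
      by (rule skel[of K TT Vk Bk]) (use supT BV disjV' Kk True in auto)
    have dom: "?R u v \<Longrightarrow> u \<in> lab ` {..<10} \<and> v \<in> lab ` {..<10}" for u v
      using Bk_lab cset_lt Kk by blast
    have tr: "?R\<^sup>*\<^sup>* (lab a) (lab b) \<longleftrightarrow> (\<lambda>u v. u \<in> {..<10} \<and> v \<in> {..<10} \<and> ?R (lab u) (lab v))\<^sup>*\<^sup>* a b"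
      by (rule rt_transfer[OF dom lab_inj]) (use a b in auto)
    have eq: "(\<lambda>u v. u \<in> {..<10} \<and> v \<in> {..<10} \<and> ?R (lab u) (lab v)) = ?S"
    proof (intro ext iffI)
      fix u v assume "u \<in> {..<10} \<and> v \<in> {..<10} \<and> ?R (lab u) (lab v)"
      then obtain k where k: "k \<in> K" "lab u \<in> Bk k" "lab v \<in> Bk k" "er (TT k) (lab u) (lab v)" "u < 10" "v < 10" by auto
      have "u \<in> cset k" "v \<in> cset k" using k lab_Bk Kk by blast+
      then show "?S u v" using Rst_er k by blast
    next
      fix u v assume "?S u v"
      then obtain k where k: "k \<in> K" "Rst (ts!k) k u v" by blast
      then have h: "u \<in> cset k" "v \<in> cset k" "er (TT k) (lab u) (lab v)" using Rst_er by blast+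
      have "u < 10" "v < 10" using h cset_lt Kk k by auto
      then show "u \<in> {..<10} \<and> v \<in> {..<10} \<and> ?R (lab u) (lab v)" using h k Bk_lab Kk by auto
    qed
    show ?thesis using sk tr eq by simp
  next
    case False
    then consider "lab a \<notin> ?J" | "lab b \<notin> ?J" by blast
    then show ?thesis
    proof cases
      case 1
      have l: "er (\<Union>k\<in>K. TT k) (lab a) (lab b) \<longleftrightarrow> a = b"
      proof
        assume h: "er (\<Union>k\<in>K. TT k) (lab a) (lab b)"
        show "a = b"
        proof (rule ccontr)
          assume "a \<noteq> b"
          then have "lab a \<noteq> lab b" using lab_inj a b by (metis inj_onD lessThan_iff)
          then show False using er_supp1[OF h] notJ[OF a 1] by blast
        qed
      qed simp
      have r: "?S\<^sup>*\<^sup>* a b \<longleftrightarrow> a = b"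
      proof
        assume "?S\<^sup>*\<^sup>* a b"
        then show "a = b" by (rule rt_nodom) (use Sdom lab_J[OF a] 1 in blast)
      qed simp
      show ?thesis using l r by simp
    next
      case 2
      have l: "er (\<Union>k\<in>K. TT k) (lab a) (lab b) \<longleftrightarrow> a = b"
      proof
        assume h: "er (\<Union>k\<in>K. TT k) (lab a) (lab b)"
        show "a = b"
        proof (rule ccontr)
          assume "a \<noteq> b"
          then have "lab a \<noteq> lab b" using lab_inj a b by (metis inj_onD lessThan_iff)
          then show False using er_supp2[OF h] notJ[OF b 2] by blast
        qed
      qed simp
      have r: "?S\<^sup>*\<^sup>* a b \<longleftrightarrow> a = b"
      proof
        assume "?S\<^sup>*\<^sup>* a b"
        then show "a = b" by (rule rt_nodom2) (use Sdom lab_J[OF b] 2 in blast)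
      qed simp
      show ?thesis using l r by simp
    qed
  qed
qed

lemma er_lab_cls:
  assumes m: "m \<le> 6" and st: "\<And>k. k < m \<Longrightarrow> stOK (F k \<circ> p) (ts!k) (TT k)"
    and sub: "\<And>k. k < m \<Longrightarrow> TT k \<subseteq> Ek k" and a: "a < 10" and b: "b < 10"
  shows "er (\<Union>k\<in>{..<m}. TT k) (lab a) (lab b) \<longleftrightarrow> cls_of ts m ! a = cls_of ts m ! b"
proof -
  have "er (\<Union>k\<in>{..<m}. TT k) (lab a) (lab b) \<longleftrightarrow> (\<lambda>u v. \<exists>k\<in>{..<m}. Rst (ts!k) k u v)\<^sup>*\<^sup>* a b"
    by (rule er_lab) (use m st sub a b in auto)
  also have "\<dots> \<longleftrightarrow> (SG ts m)\<^sup>*\<^sup>* a b"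
  proof (rule rt_eq[symmetric])
    fix u v assume "SG ts m u v"
    then obtain j where j: "j < m" "Rgen (ts!j) (cells!j) u v" unfolding SG_def by blast
    have "j < 6" using j m by simp
    then show "\<exists>k\<in>{..<m}. Rst (ts!k) k u v" using Rgen_Rst[OF _ j(2)] j(1) by blast
  next
    fix u v assume "\<exists>k\<in>{..<m}. Rst (ts!k) k u v"
    then obtain k where k: "k < m" "Rst (ts!k) k u v" by auto
    then have "(Rgen (ts!k) (cells!k))\<^sup>*\<^sup>* u v" using Rst_Rgen m by auto
    then show "(SG ts m)\<^sup>*\<^sup>* u v"
      by (rule rtranclp_mono[THEN predicate2D, rotated]) (use k(1) in \<open>auto simp: SG_def\<close>)
  qed
  also have "\<dots> \<longleftrightarrow> cls_of ts m ! a = cls_of ts m ! b"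
    using repr_cls[OF m, of ts] a b unfolding repr_def by blast
  finally show ?thesis .
qed

end


lemma card_lists:
  "card {Ts. length Ts = length As \<and> (\<forall>k<length As. Ts!k \<in> As!k)} = prod_list (map card As)"
proof (induction As)
  case Nil
  have "{Ts. length Ts = length ([]::'a set list) \<and> (\<forall>k<length ([]::'a set list). Ts!k \<in> ([]::'a set list)!k)} = {[]}" by auto
  then show ?case by simp
next
  case (Cons A As)
  let ?S = "\<lambda>As. {Ts. length Ts = length As \<and> (\<forall>k<length As. Ts!k \<in> As!k)}"
  have e: "?S (A#As) = (\<lambda>(x,xs). x#xs) ` (A \<times> ?S As)"
  proof
    show "?S (A#As) \<subseteq> (\<lambda>(x,xs). x#xs) ` (A \<times> ?S As)"
    proof
      fix Ts assume h: "Ts \<in> ?S (A#As)"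
      then have l: "length Ts = Suc (length As)" and m: "\<And>k. k < Suc (length As) \<Longrightarrow> Ts!k \<in> (A#As)!k" by auto
      obtain x xs where Ts: "Ts = x # xs" using l by (cases Ts) auto
      have "x \<in> A" using m[of 0] Ts by simp
      moreover have "xs \<in> ?S As"
      proof -
        have "length xs = length As" using l Ts by simp
        moreover have "xs!k \<in> As!k" if "k < length As" for k using m[of "Suc k"] that Ts by simp
        ultimately show ?thesis by blast
      qed
      ultimately show "Ts \<in> (\<lambda>(x,xs). x#xs) ` (A \<times> ?S As)" using Ts by auto
    qed
    show "(\<lambda>(x,xs). x#xs) ` (A \<times> ?S As) \<subseteq> ?S (A#As)"
      by (auto simp: nth_Cons split: nat.splits)
  qed
  have inj: "inj_on (\<lambda>(x,xs). x#xs) (A \<times> ?S As)" by (auto simp: inj_on_def)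
  show ?case unfolding e card_image[OF inj] card_cartesian_product Cons.IH by simp
qed

context frame
begin

lemma acyc_cls:
  assumes m: "m \<le> 6" and st: "\<And>k. k < 6 \<Longrightarrow> stOK (F k \<circ> p) (ts!k) (TT k)"
    and sub: "\<And>k. k < 6 \<Longrightarrow> TT k \<subseteq> Ek k"
  shows "acyc (\<Union>k\<in>{..<m}. TT k) \<longleftrightarrow> (\<forall>k<m. acyc (TT k) \<and> okc (cells!k) (ts!k) (cls_of ts k))"
  using m
proof (induction m)
  case 0 then show ?case by (simp add: acyc_def)
next
  case (Suc m)
  then have m6: "m < 6" by simp
  let ?A = "TT m" and ?C = "\<Union>k\<in>{..<m}. TT k"
  have U: "(\<Union>k\<in>{..<Suc m}. TT k) = ?A \<union> ?C" by (auto simp: lessThan_Suc)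
  have supp: "\<Union>?A \<inter> \<Union>?C \<subseteq> Bk m"
  proof
    fix x assume x: "x \<in> \<Union>?A \<inter> \<Union>?C"
    then have xm: "x \<in> Vk m" using sub[OF m6] EkV by blast
    from x obtain k where k: "k < m" "x \<in> \<Union>(TT k)" by auto
    then have "x \<in> Vk k" using sub[of k] EkV m6 by fastforce
    then show "x \<in> Bk m" using disjV'[OF m6, of k] xm k(1) m6 by auto
  qed
  have disj: "?A \<inter> ?C = {}"
  proof -
    have "TT m \<inter> TT k = {}" if "k < m" for k
      using Ek_disj[OF m6, of k] sub[OF m6] sub[of k] that m6 by auto
    then show ?thesis by blast
  qed
  have finA: "finite ?A" using sub[OF m6] finite_Ek finite_subset by blast
  let ?cl = "cls_of ts m"
  have erA: "er ?A (lab (cc m i)) (lab (cc m j)) \<longleftrightarrow> sp (ts!m) i j" if "i < 3" "j < 3" for i j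
    using st[OF m6] that F_corner[OF m6] unfolding stOK_def by auto
  have erC: "er ?C (lab x) (lab y) \<longleftrightarrow> ?cl!x = ?cl!y" if "x < 10" "y < 10" for x y
    by (rule er_lab_cls) (use that m6 st sub in auto)
  have labeq: "lab (cc m i) = lab (cc m j) \<longleftrightarrow> i = j" if "i < 3" "j < 3" for i j
  proof -
    have "cc m i < 10" "cc m j < 10" using cc_lt m6 by auto
    then have "lab (cc m i) = lab (cc m j) \<longleftrightarrow> cc m i = cc m j" using lab_inj by (auto simp: inj_on_def)
    then show ?thesis using cc_inj[OF m6 that] by simp
  qed
  have Bm: "Bk m = (\<lambda>i. lab (cc m i)) ` {..<3}" unfolding Bk_def image_image
    using F_corner[OF m6] by (intro image_cong) auto
  have Piff: "(\<forall>u\<in>Bk m. \<forall>v\<in>Bk m. er ?A u v \<longrightarrow> er ?C u v \<longrightarrow> u = v) \<longleftrightarrow> okc (cells!m) (ts!m) ?cl"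
  proof -
    have "(\<forall>u\<in>Bk m. \<forall>v\<in>Bk m. er ?A u v \<longrightarrow> er ?C u v \<longrightarrow> u = v) \<longleftrightarrow>
       (\<forall>i<3. \<forall>j<3. er ?A (lab (cc m i)) (lab (cc m j)) \<longrightarrow> er ?C (lab (cc m i)) (lab (cc m j)) \<longrightarrow> lab (cc m i) = lab (cc m j))"
      unfolding Bm by auto
    also have "\<dots> \<longleftrightarrow> (\<forall>i<3. \<forall>j<3. sp (ts!m) i j \<longrightarrow> ?cl!(cc m i) = ?cl!(cc m j) \<longrightarrow> i = j)"
      using erA erC labeq cc_lt[OF m6] by auto
    also have "\<dots> \<longleftrightarrow> okc (cells!m) (ts!m) ?cl" by (rule okc_iff[OF m6, symmetric])
    finally show ?thesis .
  qed
  have "acyc (?A \<union> ?C) \<longleftrightarrow> acyc ?A \<and> acyc ?C \<and> okc (cells!m) (ts!m) ?cl"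
  proof
    assume a: "acyc (?A \<union> ?C)"
    have "acyc ?A" "acyc ?C" using acyc_mono[OF a] by auto
    moreover have "\<forall>u\<in>Bk m. \<forall>v\<in>Bk m. er ?A u v \<longrightarrow> er ?C u v \<longrightarrow> u = v"
      using acyc_glue_P[OF a disj finA] by blast
    ultimately show "acyc ?A \<and> acyc ?C \<and> okc (cells!m) (ts!m) ?cl" using Piff by blast
  next
    assume a: "acyc ?A \<and> acyc ?C \<and> okc (cells!m) (ts!m) ?cl"
    then have P: "\<forall>u\<in>Bk m. \<forall>v\<in>Bk m. er ?A u v \<longrightarrow> er ?C u v \<longrightarrow> u = v" using Piff by blast
    show "acyc (?A \<union> ?C)"
      by (rule acyc_glue[OF _ _ supp Bk_fin]) (use a P in auto)
  qed
  then show ?case using U Suc.IH m6 by (auto simp: less_Suc_eq)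
qed

lemma P0_lab: "P0 = {lab 0, lab 3, lab 9}"
proof -
  have "{..<3::nat} = {0,1,2}" by auto
  then show ?thesis unfolding P0_def using p_lab by simp
qed

lemma lab_V': "a < 10 \<Longrightarrow> lab a \<in> V'"
proof -
  assume "a < 10"
  then obtain k where "k < 6" "a \<in> cset k" using cset_cover by blast
  then show "lab a \<in> V'" unfolding V'_def using Bk_lab BV by blast
qed

lemma rooted_decomp:
  assumes T: "T \<subseteq> E'"
  shows "(\<forall>x\<in>V'. \<exists>b\<in>P0. er T x b) \<longleftrightarrow>
    (\<forall>k<6. \<forall>x\<in>Vk k. \<exists>b\<in>Bk k. er (Tk T k) x b) \<and> (\<forall>a<10. \<exists>c\<in>{0,3,9}. er T (lab a) (lab c))"
proof -
  have TU: "T = (\<Union>k\<in>{..<6}. Tk T k)" using T_union[OF T] .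
  have sub: "\<And>k. k \<in> {..<6} \<Longrightarrow> \<Union>(Tk T k) \<subseteq> Vk k" using EkV unfolding Tk_def by blast
  have disj: "\<And>i j. i\<in>{..<6} \<Longrightarrow> j\<in>{..<6} \<Longrightarrow> i\<noteq>j \<Longrightarrow> Vk i \<inter> Vk j \<subseteq> Bk i \<inter> Bk j"
    using disjV' by auto
  show ?thesis
  proof
    assume R: "\<forall>x\<in>V'. \<exists>b\<in>P0. er T x b"
    have part1: "\<exists>b\<in>Bk k. er (Tk T k) x b" if k: "k < 6" and x: "x \<in> Vk k" for k x
    proof -
      have "x \<in> V'" using k x unfolding V'_def by blast
      then obtain b where b: "b \<in> P0" "er T x b" using R by blast
      obtain c where c: "c \<in> {0,3,9::nat}" "b = lab c" using b(1) P0_lab by auto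
      have "er (\<Union>k\<in>{..<6}. Tk T k) x b" using b TU by simp
      from piece_exit[OF sub disj _ x this] k
      have "er (Tk T k) x b \<or> (\<exists>b'\<in>Bk k. er (Tk T k) x b' \<and> er (\<Union>j\<in>{..<6}. Tk T j) b' b)" by simp
      then show ?thesis
      proof
        assume h: "er (Tk T k) x b"
        have "b \<in> Vk k" using h x er_supp2[OF h] sub[of k] k by (cases "x = b") auto
        then have "c \<in> cset k" using lab_in_Vk[OF k] c by auto
        then have "b \<in> Bk k" using Bk_lab[OF k] c by auto
        then show ?thesis using h by blast
      qed blast
    qed
    have part2: "\<exists>c\<in>{0,3,9}. er T (lab a) (lab c)" if "a < 10" for a
      using R lab_V'[OF that] P0_lab by auto
    show "(\<forall>k<6. \<forall>x\<in>Vk k. \<exists>b\<in>Bk k. er (Tk T k) x b) \<and> (\<forall>a<10. \<exists>c\<in>{0,3,9}. er T (lab a) (lab c))"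
      using part1 part2 by blast
  next
    assume R: "(\<forall>k<6. \<forall>x\<in>Vk k. \<exists>b\<in>Bk k. er (Tk T k) x b) \<and> (\<forall>a<10. \<exists>c\<in>{0,3,9}. er T (lab a) (lab c))"
    show "\<forall>x\<in>V'. \<exists>b\<in>P0. er T x b"
    proof
      fix x assume "x \<in> V'"
      then obtain k where k: "k < 6" "x \<in> Vk k" unfolding V'_def by blast
      then obtain b where b: "b \<in> Bk k" "er (Tk T k) x b" using R by blast
      obtain a where a: "a \<in> cset k" "b = lab a" using b(1) Bk_lab[OF k(1)] by auto
      have "a < 10" using a cset_lt k by auto
      then obtain c where c: "c \<in> {0,3,9}" "er T (lab a) (lab c)" using R by blast
      have "er T x b" using b(2) by (rule er_mono[rotated]) (auto simp: Tk_def)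
      then have "er T x (lab c)" using c a er_trans by metis
      then show "\<exists>b\<in>P0. er T x b" using c P0_lab by auto
    qed
  qed
qed

lemma char:
  assumes T: "T \<subseteq> E'" and ts: "length ts = 6"
    and st: "\<And>k. k < 6 \<Longrightarrow> stOK (F k \<circ> p) (ts!k) (Tk T k)" and s: "s < 5"
  shows "(rforest V' E' P0 T \<and> stOK p s T) \<longleftrightarrow> (\<forall>k<6. rforest (Vk k) (Ek k) (Bk k) (Tk T k)) \<and> good ts s"
proof -
  have TU: "T = (\<Union>k\<in>{..<6}. Tk T k)" using T_union[OF T] .
  have sub: "\<And>k. k < 6 \<Longrightarrow> Tk T k \<subseteq> Ek k" unfolding Tk_def by blast
  let ?cl = "cls_of ts 6"
  have erT: "er T (lab a) (lab b) \<longleftrightarrow> ?cl!a = ?cl!b" if "a < 10" "b < 10" for a b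
    using er_lab_cls[of 6 ts "Tk T", OF _ st sub that] TU by simp
  have A: "acyc T \<longleftrightarrow> (\<forall>k<6. acyc (Tk T k) \<and> okc (cells!k) (ts!k) (cls_of ts k))"
    using acyc_cls[of 6 ts "Tk T", OF _ st sub] TU by simp
  have R: "(\<forall>x\<in>V'. \<exists>b\<in>P0. er T x b) \<longleftrightarrow>
    (\<forall>k<6. \<forall>x\<in>Vk k. \<exists>b\<in>Bk k. er (Tk T k) x b) \<and> rooted ?cl"
  proof -
    have "(\<forall>a<10. \<exists>c\<in>{0,3,9}. er T (lab a) (lab c)) \<longleftrightarrow> rooted ?cl"
      unfolding rooted_iff using erT by auto
    then show ?thesis using rooted_decomp[OF T] by simp
  qed
  have S: "stOK p s T \<longleftrightarrow> cst ?cl = s"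
  proof -
    have pp: "p i = lab (pl i)" if "i < 3" for i using that p_lab by (auto simp: pl_def less3)
    have "stOK p s T \<longleftrightarrow> (\<forall>i<3. \<forall>j<3. ?cl!(pl i) = ?cl!(pl j) \<longleftrightarrow> sp s i j)"
      unfolding stOK_def using pp erT by (auto simp: pl_def less3)
    then show ?thesis using cst_iff[OF s] by simp
  qed
  show ?thesis
    unfolding rforest_def good_def using A R S T sub by blast
qed

definition PL :: "nat list \<Rightarrow> 'a set set list set" where
  "PL ts = {Ts. length Ts = 6 \<and> (\<forall>k<6. Ts!k \<in> RFk k (ts!k))}"

lemma PL_union_Tk:
  assumes "Ts \<in> PL ts" "k < 6"
  shows "Tk (\<Union>(set Ts)) k = Ts!k"
proof -
  have l: "length Ts = 6" and m: "\<And>k. k < 6 \<Longrightarrow> Ts!k \<subseteq> Ek k"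
    using assms(1) unfolding PL_def RFk_def rforest_def by auto
  have "set Ts = (\<lambda>j. Ts!j) ` {..<6}" using l by (auto simp: set_conv_nth)
  then have U: "\<Union>(set Ts) = (\<Union>j\<in>{..<6}. Ts!j)" by simp
  have d: "Ts!j \<inter> Ek k = (if j = k then Ts!k else {})" if "j < 6" for j
    using m[OF that] m[OF assms(2)] Ek_disj[OF that assms(2)] by auto
  have "Tk (\<Union>(set Ts)) k = (\<Union>j\<in>{..<6}. Ts!j \<inter> Ek k)" unfolding Tk_def U by auto
  also have "\<dots> = (\<Union>j\<in>{..<6}. if j = k then Ts!k else {})" using d by (intro SUP_cong) auto
  also have "\<dots> = Ts!k" using assms(2) by auto
  finally show ?thesis .
qed

lemma RF'_eq:
  assumes s: "s < 5"
  shows "RF' s = (\<lambda>Ts. \<Union>(set Ts)) ` (\<Union>ts\<in>{ts\<in>LSet 6. good ts s}. PL ts)"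
proof
  show "RF' s \<subseteq> (\<lambda>Ts. \<Union>(set Ts)) ` (\<Union>ts\<in>{ts\<in>LSet 6. good ts s}. PL ts)"
  proof
    fix T assume T: "T \<in> RF' s"
    then have TE: "T \<subseteq> E'" unfolding RF'_def rforest_def by blast
    define ts where "ts = map (\<lambda>k. SOME t. t < 5 \<and> stOK (F k \<circ> p) t (Tk T k)) [0..<6]"
    have tsk: "ts!k < 5 \<and> stOK (F k \<circ> p) (ts!k) (Tk T k)" if "k < 6" for k
    proof -
      have ex: "\<exists>t. t < 5 \<and> stOK (F k \<circ> p) t (Tk T k)" using stOK_ex by blast
      have "ts!k = (SOME t. t < 5 \<and> stOK (F k \<circ> p) t (Tk T k))" using that unfolding ts_def by simp
      then show ?thesis using someI_ex[OF ex] by simp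
    qed
    have lts: "length ts = 6" unfolding ts_def by simp
    have c: "(\<forall>k<6. rforest (Vk k) (Ek k) (Bk k) (Tk T k)) \<and> good ts s"
      using char[OF TE lts _ s] tsk T unfolding RF'_def by blast
    have tsL: "ts \<in> LSet 6" unfolding LSet_def using lts tsk by (auto simp: in_set_conv_nth)
    let ?Ts = "map (Tk T) [0..<6]"
    have "?Ts \<in> PL ts" unfolding PL_def RFk_def using c tsk by auto
    moreover have "\<Union>(set ?Ts) = T" using T_union[OF TE] by (simp add: atLeast0LessThan)
    ultimately show "T \<in> (\<lambda>Ts. \<Union>(set Ts)) ` (\<Union>ts\<in>{ts\<in>LSet 6. good ts s}. PL ts)"
      using tsL c by blast
  qed
next
  show "(\<lambda>Ts. \<Union>(set Ts)) ` (\<Union>ts\<in>{ts\<in>LSet 6. good ts s}. PL ts) \<subseteq> RF' s"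
  proof
    fix T assume "T \<in> (\<lambda>Ts. \<Union>(set Ts)) ` (\<Union>ts\<in>{ts\<in>LSet 6. good ts s}. PL ts)"
    then obtain ts Ts where tsL: "ts \<in> LSet 6" "good ts s" and Ts: "Ts \<in> PL ts" and TT: "T = \<Union>(set Ts)" by blast
    have lts: "length ts = 6" using tsL unfolding LSet_def by simp
    have l: "length Ts = 6" using Ts unfolding PL_def by simp
    have TE: "T \<subseteq> E'"
    proof
      fix e assume "e \<in> T"
      then obtain k where k: "k < 6" "e \<in> Ts!k" using TT l by (auto simp: in_set_conv_nth)
      then have "e \<in> Ek k" using Ts unfolding PL_def RFk_def rforest_def by auto
      then show "e \<in> E'" unfolding E'_def using k by auto
    qed
    have tk: "Tk T k = Ts!k" if "k < 6" for k using PL_union_Tk[OF Ts that] TT by simp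
    have st: "stOK (F k \<circ> p) (ts!k) (Tk T k)" if "k < 6" for k
      using Ts that tk unfolding PL_def RFk_def by auto
    have "(\<forall>k<6. rforest (Vk k) (Ek k) (Bk k) (Tk T k)) \<and> good ts s"
      using Ts tk tsL unfolding PL_def RFk_def by auto
    then show "T \<in> RF' s" using char[OF TE lts st s] unfolding RF'_def by blast
  qed
qed

lemma inj_union: "inj_on (\<lambda>Ts. \<Union>(set Ts)) (\<Union>ts\<in>A. PL ts)"
proof (rule inj_onI)
  fix Ts Ts' assume a: "Ts \<in> (\<Union>ts\<in>A. PL ts)" "Ts' \<in> (\<Union>ts\<in>A. PL ts)" "\<Union>(set Ts) = \<Union>(set Ts')"
  then obtain ts ts' where t: "Ts \<in> PL ts" "Ts' \<in> PL ts'" by blast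
  have "Ts!k = Ts'!k" if "k < 6" for k
    using PL_union_Tk[OF t(1) that] PL_union_Tk[OF t(2) that] a(3) by simp
  moreover have "length Ts = 6" "length Ts' = 6" using t unfolding PL_def by auto
  ultimately show "Ts = Ts'" by (simp add: nth_equalityI)
qed

lemma PL_disj: "ts \<in> LSet 6 \<Longrightarrow> ts' \<in> LSet 6 \<Longrightarrow> ts \<noteq> ts' \<Longrightarrow> PL ts \<inter> PL ts' = {}"
proof (rule ccontr)
  assume a: "ts \<in> LSet 6" "ts' \<in> LSet 6" "ts \<noteq> ts'" "PL ts \<inter> PL ts' \<noteq> {}"
  then obtain Ts where Ts: "Ts \<in> PL ts" "Ts \<in> PL ts'" by blast
  have "ts!k = ts'!k" if "k < 6" for k
  proof -
    have "stOK (F k \<circ> p) (ts!k) (Ts!k)" "stOK (F k \<circ> p) (ts'!k) (Ts!k)"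
      using Ts that unfolding PL_def RFk_def by auto
    moreover have "ts!k < 5" "ts'!k < 5" using a(1,2) that unfolding LSet_def by (auto simp: subset_iff)
    ultimately show ?thesis using stOK_uniq by blast
  qed
  moreover have "length ts = 6" "length ts' = 6" using a unfolding LSet_def by auto
  ultimately show False using a(3) by (simp add: nth_equalityI)
qed

lemma card_PL: "ts \<in> LSet 6 \<Longrightarrow> card (PL ts) = prod_list (map (\<lambda>t. card (RF t)) ts)"
proof -
  assume ts: "ts \<in> LSet 6"
  then have lts: "length ts = 6" unfolding LSet_def by simp
  let ?As = "map (\<lambda>k. RFk k (ts!k)) [0..<6]"
  have e: "PL ts = {Ts. length Ts = length ?As \<and> (\<forall>k<length ?As. Ts!k \<in> ?As!k)}"
    unfolding PL_def by auto
  have "card (PL ts) = prod_list (map card ?As)" unfolding e by (rule card_lists)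
  also have "map card ?As = map (\<lambda>t. card (RF t)) ts"
    using card_RFk lts by (auto intro!: nth_equalityI)
  finally show ?thesis .
qed

lemma finite_PL: "ts \<in> LSet 6 \<Longrightarrow> finite (PL ts)"
proof -
  assume ts: "ts \<in> LSet 6"
  have sub: "PL ts \<subseteq> {Ts. set Ts \<subseteq> Pow E' \<and> length Ts = 6}"
  proof
    fix Ts assume "Ts \<in> PL ts"
    then have "length Ts = 6" "\<forall>k<6. Ts!k \<subseteq> Ek k" unfolding PL_def RFk_def rforest_def by auto
    moreover have "set Ts = (\<lambda>j. Ts!j) ` {..<6}" using \<open>length Ts = 6\<close> by (auto simp: set_conv_nth)
    ultimately show "Ts \<in> {Ts. set Ts \<subseteq> Pow E' \<and> length Ts = 6}" unfolding E'_def by auto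
  qed
  have fin: "finite (Pow E')" unfolding E'_def using finite_Ek by simp
  show ?thesis by (rule finite_subset[OF sub finite_lists_length_eq[OF fin]])
qed

theorem card_RF':
  assumes s: "s < 5"
  shows "card (RF' s) = (\<Sum>ts\<in>LSet 6. if good ts s then prod_list (map (\<lambda>t. card (RF t)) ts) else 0)"
proof -
  let ?G = "{ts\<in>LSet 6. good ts s}"
  have "card (RF' s) = card (\<Union>ts\<in>?G. PL ts)"
    unfolding RF'_eq[OF s] by (rule card_image[OF inj_union])
  also have "\<dots> = (\<Sum>ts\<in>?G. card (PL ts))"
    by (rule card_UN_disjoint) (use finite_LSet finite_PL PL_disj in auto)
  also have "\<dots> = (\<Sum>ts\<in>?G. prod_list (map (\<lambda>t. card (RF t)) ts))"
    using card_PL by simp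
  also have "\<dots> = (\<Sum>ts\<in>LSet 6. if good ts s then prod_list (map (\<lambda>t. card (RF t)) ts) else 0)"
    by (simp add: sum.inter_filter[symmetric] finite_LSet)
  finally show ?thesis .
qed

end


definition co :: "real \<Rightarrow> real \<Rightarrow> complex" where
  "co u v = Complex (u + v/2) (v * sqrt 3 / 2)"

lemma co_eq_iff: "co a b = co c d \<longleftrightarrow> a = c \<and> b = d"
  unfolding co_def by (auto simp: complex_eq_iff)

lemma co_add: "co a b + co c d = co (a+c) (b+d)"
  unfolding co_def by (simp add: complex_eq_iff algebra_simps)

lemma co_div3: "co a b / 3 = co (a/3) (b/3)"
  unfolding co_def by (simp add: complex_eq_iff)

lemma sg_p_co: "sg_p1 = co 0 0" "sg_p2 = co 1 0" "sg_p3 = co 0 1"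
  unfolding co_def sg_p1_def sg_p2_def sg_p3_def by (simp_all add: complex_eq_iff)

definition su :: "nat \<Rightarrow> real" where
  "su i = (if i = 2 \<or> i = 5 then 1/3 else if i = 3 then 2/3 else 0)"
definition sv :: "nat \<Rightarrow> real" where
  "sv i = (if i = 4 \<or> i = 5 then 1/3 else if i = 6 then 2/3 else 0)"

lemma sg_shift_co: "i \<in> {1..6} \<Longrightarrow> sg_shift i = co (su i) (sv i)"
proof -
  assume "i \<in> {1..6}"
  then have "i = 1 \<or> i = 2 \<or> i = 3 \<or> i = 4 \<or> i = 5 \<or> i = 6" by auto
  then show ?thesis
    unfolding sg_shift_def su_def sv_def sg_p_co co_def
    by (elim disjE) (simp_all add: complex_eq_iff)
qed

lemma sg_F_co: "i \<in> {1..6} \<Longrightarrow> sg_F i (co u v) = co (u/3 + su i) (v/3 + sv i)"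
  unfolding sg_F_def using sg_shift_co by (simp add: co_div3 co_add)

lemma sg_F_inj: "inj (sg_F i)"
  unfolding sg_F_def by (rule injI) simp

definition simplex :: "complex set" where
  "simplex = {co u v | u v. 0 \<le> u \<and> 0 \<le> v \<and> u + v \<le> 1}"

lemma sg_F_simplex: "i \<in> {1..6} \<Longrightarrow> z \<in> simplex \<Longrightarrow> sg_F i z \<in> simplex"
proof -
  assume i: "i \<in> {1..6}" and z: "z \<in> simplex"
  then obtain u v where uv: "z = co u v" "0 \<le> u" "0 \<le> v" "u + v \<le> 1" unfolding simplex_def by blast
  have "su i \<ge> 0" "sv i \<ge> 0" "su i + sv i \<le> 2/3" unfolding su_def sv_def by auto
  then have "0 \<le> u/3 + su i" "0 \<le> v/3 + sv i" "(u/3 + su i) + (v/3 + sv i) \<le> 1" using uv by auto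
  then show ?thesis unfolding simplex_def uv(1) sg_F_co[OF i] by blast
qed

lemma sg_words_Suc: "sg_words (Suc n) = (\<lambda>(i,w). i # w) ` ({1..6} \<times> sg_words n)"
proof
  show "sg_words (Suc n) \<subseteq> (\<lambda>(i,w). i # w) ` ({1..6} \<times> sg_words n)"
  proof
    fix w assume "w \<in> sg_words (Suc n)"
    then obtain i w' where "w = i # w'" "i \<in> {1..6}" "w' \<in> sg_words n"
      unfolding sg_words_def by (cases w) auto
    then show "w \<in> (\<lambda>(i,w). i # w) ` ({1..6} \<times> sg_words n)" by auto
  qed
  show "(\<lambda>(i,w). i # w) ` ({1..6} \<times> sg_words n) \<subseteq> sg_words (Suc n)"
    unfolding sg_words_def by auto
qed

lemma finite_words: "finite (sg_words n)"
proof -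
  have "sg_words n \<subseteq> {w. set w \<subseteq> {1..6} \<and> length w = n}" unfolding sg_words_def by auto
  then show ?thesis using finite_lists_length_eq[of "{1..6::nat}" n] finite_subset by blast
qed

lemma Fw_cons_img: "sg_Fw (i#w) ` A = sg_F i ` (sg_Fw w ` A)"
  by (simp add: image_comp)

lemma sg_cells_Suc: "sg_cells (Suc n) = (\<Union>i\<in>{1..6}. (\<lambda>C. sg_F i ` C) ` sg_cells n)"
proof (rule set_eqI, rule iffI)
  fix C assume "C \<in> sg_cells (Suc n)"
  then obtain i w where "i \<in> {1..6}" "w \<in> sg_words n" "C = sg_Fw (i#w) ` sg_V0"
    unfolding sg_cells_def sg_words_Suc by auto
  then show "C \<in> (\<Union>i\<in>{1..6}. (\<lambda>C. sg_F i ` C) ` sg_cells n)"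
    unfolding sg_cells_def Fw_cons_img by blast
next
  fix C assume "C \<in> (\<Union>i\<in>{1..6}. (\<lambda>C. sg_F i ` C) ` sg_cells n)"
  then obtain i w where iw: "i \<in> {1..6}" "w \<in> sg_words n" "C = sg_F i ` (sg_Fw w ` sg_V0)"
    unfolding sg_cells_def by auto
  then have "i # w \<in> sg_words (Suc n)" unfolding sg_words_Suc by auto
  then show "C \<in> sg_cells (Suc n)" unfolding sg_cells_def using iw Fw_cons_img by (metis image_eqI)
qed

lemma sg_V_Suc: "sg_V (Suc n) = (\<Union>i\<in>{1..6}. sg_F i ` sg_V n)"
  unfolding sg_V_def sg_cells_Suc by blast

lemma sg_V_0: "sg_V 0 = sg_V0"
proof -
  have "sg_words 0 = {[]}" unfolding sg_words_def by auto
  then show ?thesis unfolding sg_V_def sg_cells_def by simp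
qed

lemma sg_E_0: "sg_E 0 = {{x, y} | x y. x \<noteq> y \<and> x \<in> sg_V0 \<and> y \<in> sg_V0}"
proof -
  have "sg_words 0 = {[]}" unfolding sg_words_def by auto
  then have "sg_cells 0 = {sg_V0}" unfolding sg_cells_def by simp
  then show ?thesis unfolding sg_E_def by auto
qed

lemma sg_E_Suc: "sg_E (Suc n) = (\<Union>i\<in>{1..6}. imgE (sg_F i) (sg_E n))"
proof
  show "sg_E (Suc n) \<subseteq> (\<Union>i\<in>{1..6}. imgE (sg_F i) (sg_E n))"
  proof
    fix e assume "e \<in> sg_E (Suc n)"
    then obtain x y C where e: "e = {x,y}" "x \<noteq> y" "C \<in> sg_cells (Suc n)" "x \<in> C" "y \<in> C"
      unfolding sg_E_def by blast
    then obtain i C0 where i: "i \<in> {1..6}" "C0 \<in> sg_cells n" "C = sg_F i ` C0" unfolding sg_cells_Suc by blast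
    then obtain x0 y0 where xy: "x0 \<in> C0" "y0 \<in> C0" "x = sg_F i x0" "y = sg_F i y0" using e by blast
    have "x0 \<noteq> y0" using xy e by blast
    then have "{x0,y0} \<in> sg_E n" unfolding sg_E_def using xy i by blast
    then have "e \<in> imgE (sg_F i) (sg_E n)" unfolding imgE_def using e xy by (intro image_eqI[of _ _ "{x0,y0}"]) auto
    then show "e \<in> (\<Union>i\<in>{1..6}. imgE (sg_F i) (sg_E n))" using i by blast
  qed
  show "(\<Union>i\<in>{1..6}. imgE (sg_F i) (sg_E n)) \<subseteq> sg_E (Suc n)"
  proof
    fix e assume "e \<in> (\<Union>i\<in>{1..6}. imgE (sg_F i) (sg_E n))"
    then obtain i e0 where i: "i \<in> {1..6}" "e0 \<in> sg_E n" "e = sg_F i ` e0" unfolding imgE_def by blast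
    then obtain x y C where e0: "e0 = {x,y}" "x \<noteq> y" "C \<in> sg_cells n" "x \<in> C" "y \<in> C"
      unfolding sg_E_def by blast
    have "sg_F i x \<noteq> sg_F i y" using e0 sg_F_inj by (simp add: inj_eq)
    moreover have "sg_F i ` C \<in> sg_cells (Suc n)" unfolding sg_cells_Suc using i e0 by blast
    ultimately show "e \<in> sg_E (Suc n)" unfolding sg_E_def using i e0 by blast
  qed
qed

lemma finite_cells: "finite (sg_cells n)" unfolding sg_cells_def using finite_words by simp
lemma finite_cell: "C \<in> sg_cells n \<Longrightarrow> finite C" unfolding sg_cells_def sg_V0_def by auto
lemma finite_V: "finite (sg_V n)" unfolding sg_V_def using finite_cells finite_cell by blast

lemma finite_E: "finite (sg_E n)"
proof -
  have "sg_E n \<subseteq> Pow (sg_V n)" unfolding sg_E_def sg_V_def by auto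
  then show ?thesis using finite_V by (meson finite_Pow_iff finite_subset)
qed

lemma EV: "\<Union>(sg_E n) \<subseteq> sg_V n" unfolding sg_E_def sg_V_def by auto

lemma E2: "e \<in> sg_E n \<Longrightarrow> \<exists>x y. x \<noteq> y \<and> e = {x,y}" unfolding sg_E_def by auto

lemma V0_sub: "sg_V0 \<subseteq> sg_V n"
proof (induction n)
  case 0 then show ?case by (simp add: sg_V_0)
next
  case (Suc n)
  have e: "sg_p1 = sg_F 1 sg_p1" "sg_p2 = sg_F 3 sg_p2" "sg_p3 = sg_F 6 sg_p3"
    unfolding sg_p_co by (simp_all add: sg_F_co su_def sv_def)
  have m: "sg_p1 \<in> sg_V n" "sg_p2 \<in> sg_V n" "sg_p3 \<in> sg_V n" using Suc unfolding sg_V0_def by auto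
  have "sg_F 1 sg_p1 \<in> sg_V (Suc n)" unfolding sg_V_Suc using m(1) by (intro UN_I[of 1]) auto
  moreover have "sg_F 3 sg_p2 \<in> sg_V (Suc n)" unfolding sg_V_Suc using m(2) by (intro UN_I[of 3]) auto
  moreover have "sg_F 6 sg_p3 \<in> sg_V (Suc n)" unfolding sg_V_Suc using m(3) by (intro UN_I[of 6]) auto
  ultimately show ?case unfolding sg_V0_def using e by simp
qed

lemma V_simplex: "sg_V n \<subseteq> simplex"
proof (induction n)
  case 0
  show ?case unfolding sg_V_0 sg_V0_def sg_p_co simplex_def by force
next
  case (Suc n)
  then show ?case unfolding sg_V_Suc using sg_F_simplex by blast
qed


definition sgp :: "nat \<Rightarrow> complex" where
  "sgp i = (if i = 0 then sg_p1 else if i = 1 then sg_p2 else sg_p3)"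
definition lu :: "nat \<Rightarrow> nat" where "lu a = [0,1,2,3,0,1,2,0,1,0] ! a"
definition lv :: "nat \<Rightarrow> nat" where "lv a = [0,0,0,0,1,1,1,2,2,3] ! a"
definition lab :: "nat \<Rightarrow> complex" where "lab a = co (real (lu a) / 3) (real (lv a) / 3)"

lemma lab_inj: "inj_on lab {..<10}"
proof (rule inj_onI)
  fix a b assume a: "a \<in> {..<10}" and b: "b \<in> {..<10}" and e: "lab a = lab b"
  have key: "x < 10 \<Longrightarrow> x = lu x + [0,4,7,9] ! (lv x)" for x
    unfolding less10 by (elim disjE) (simp_all add: lu_def lv_def)
  from e have "lu a = lu b" "lv a = lv b" unfolding lab_def co_eq_iff by auto
  then show "a = b" using key[of a] key[of b] a b by simp
qed

lemma sgp_V0: "sgp ` {..<3} = sg_V0"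
proof -
  have "{..<3::nat} = {0,1,2}" by auto
  then show ?thesis unfolding sgp_def sg_V0_def by auto
qed

lemma F_corner: "k < 6 \<Longrightarrow> i < 3 \<Longrightarrow> sg_F (Suc k) (sgp i) = lab (cc k i)"
proof -
  assume k: "k < 6" and i: "i < 3"
  have s: "Suc k \<in> {1..6}" using k by simp
  show ?thesis
    using k i unfolding less6 less3 sgp_def
    by (elim disjE) (simp_all add: sg_p_co sg_F_co su_def sv_def lab_def lu_def lv_def cc_def cells_def co_eq_iff)
qed

lemma arith_corner:
  assumes k: "k < 6" "k' < 6" "k \<noteq> k'"
    and s: "0 \<le> u" "0 \<le> v" "u + v \<le> 1" "0 \<le> u'" "0 \<le> v'" "u' + v' \<le> 1"
    and e: "u/3 + su (Suc k) = u'/3 + su (Suc k')" "v/3 + sv (Suc k) = v'/3 + sv (Suc k')"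
  shows "(u = 0 \<and> v = 0) \<or> (u = 1 \<and> v = 0) \<or> (u = 0 \<and> v = 1)"
  using k e s unfolding less6
  by (elim disjE; simp add: su_def sv_def; linarith)

lemma disjV_sg:
  assumes k: "k < 6" "k' < 6" "k \<noteq> k'"
  shows "sg_F (Suc k) ` sg_V n \<inter> sg_F (Suc k') ` sg_V n \<subseteq> sg_F (Suc k) ` sgp ` {..<3}"
proof
  fix z assume z: "z \<in> sg_F (Suc k) ` sg_V n \<inter> sg_F (Suc k') ` sg_V n"
  then obtain x x' where x: "x \<in> sg_V n" "z = sg_F (Suc k) x" "x' \<in> sg_V n" "z = sg_F (Suc k') x'" by blast
  obtain u v where uv: "x = co u v" "0 \<le> u" "0 \<le> v" "u + v \<le> 1" using x(1) V_simplex unfolding simplex_def by blast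
  obtain u' v' where uv': "x' = co u' v'" "0 \<le> u'" "0 \<le> v'" "u' + v' \<le> 1" using x(3) V_simplex unfolding simplex_def by blast
  have sk: "Suc k \<in> {1..6}" "Suc k' \<in> {1..6}" using k by auto
  have "co (u/3 + su (Suc k)) (v/3 + sv (Suc k)) = co (u'/3 + su (Suc k')) (v'/3 + sv (Suc k'))"
    using x uv uv' sg_F_co[OF sk(1)] sg_F_co[OF sk(2)] by metis
  then have e: "u/3 + su (Suc k) = u'/3 + su (Suc k')" "v/3 + sv (Suc k) = v'/3 + sv (Suc k')"
    unfolding co_eq_iff by auto
  have "(u = 0 \<and> v = 0) \<or> (u = 1 \<and> v = 0) \<or> (u = 0 \<and> v = 1)"
    by (rule arith_corner[OF k uv(2-4) uv'(2-4) e])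
  then have "x \<in> sgp ` {..<3}" unfolding sgp_V0 sg_V0_def sg_p_co uv(1) by auto
  then show "z \<in> sg_F (Suc k) ` sgp ` {..<3}" using x(2) by blast
qed

lemma frame_inst: "frame (sg_V n) (sg_E n) sgp (\<lambda>k. sg_F (Suc k)) lab"
proof
  show "\<And>k. k < 6 \<Longrightarrow> inj (sg_F (Suc k))" using sg_F_inj by blast
  show "inj_on lab {..<10}" by (rule lab_inj)
  show "\<And>k i. k < 6 \<Longrightarrow> i < 3 \<Longrightarrow> sg_F (Suc k) (sgp i) = lab (cc k i)" by (rule F_corner)
  show "\<Union>(sg_E n) \<subseteq> sg_V n" by (rule EV)
  show "\<And>i. i < 3 \<Longrightarrow> sgp i \<in> sg_V n" using V0_sub sgp_V0 by blast
  show "finite (sg_E n)" by (rule finite_E)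
  show "\<And>e. e \<in> sg_E n \<Longrightarrow> \<exists>x y. x \<noteq> y \<and> e = {x, y}" by (rule E2)
  show "\<And>k k'. k < 6 \<Longrightarrow> k' < 6 \<Longrightarrow> k \<noteq> k' \<Longrightarrow>
      sg_F (Suc k) ` sg_V n \<inter> sg_F (Suc k') ` sg_V n \<subseteq> sg_F (Suc k) ` sgp ` {..<3}"
    by (rule disjV_sg)
  show "sgp 0 = lab 0" "sgp 1 = lab 3" "sgp 2 = lab 9"
    unfolding sgp_def sg_p_co lab_def lu_def lv_def by (simp_all add: co_eq_iff)
qed

definition RFn :: "nat \<Rightarrow> nat \<Rightarrow> complex set set set" where
  "RFn n t = {T. rforest (sg_V n) (sg_E n) sg_V0 T \<and> stOK sgp t T}"

definition Nn :: "nat \<Rightarrow> nat \<Rightarrow> nat" where "Nn n t = card (RFn n t)"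

lemma UN_shift6: "(\<Union>i\<in>{1..6::nat}. f i) = (\<Union>k\<in>{..<6}. f (Suc k))"
proof -
  have "{1..6::nat} = Suc ` {..<6}" by (simp add: image_Suc_lessThan)
  then show ?thesis by simp
qed

lemma Nn_Suc: "s < 5 \<Longrightarrow> Nn (Suc n) s = (\<Sum>ts\<in>LSet 6. if good ts s then prod_list (map (Nn n) ts) else 0)"
proof -
  assume s: "s < 5"
  interpret L: frame "sg_V n" "sg_E n" sgp "\<lambda>k. sg_F (Suc k)" lab by (rule frame_inst)
  have V': "L.V' = sg_V (Suc n)" unfolding L.V'_def L.Vk_def sg_V_Suc UN_shift6 by simp
  have E': "L.E' = sg_E (Suc n)" unfolding L.E'_def L.Ek_def sg_E_Suc UN_shift6 by simp
  have P0: "L.P0 = sg_V0" unfolding L.P0_def sgp_V0 ..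
  have RF: "L.RF t = RFn n t" for t unfolding L.RF_def RFn_def P0 ..
  have RF': "L.RF' s = RFn (Suc n) s" unfolding L.RF'_def RFn_def P0 V' E' ..
  show ?thesis using L.card_RF'[OF s] unfolding RF RF' Nn_def by simp
qed


lemma er_insert: "er (insert {x,y} T) u v \<longleftrightarrow> er T u v \<or> (er T u x \<and> er T y v) \<or> (er T u y \<and> er T x v)"
proof
  assume h: "er (insert {x,y} T) u v"
  have s: "insert {x,y} T - {{x,y}} \<subseteq> T" by blast
  from er_remove[OF h refl] show "er T u v \<or> (er T u x \<and> er T y v) \<or> (er T u y \<and> er T x v)"
    using er_mono[OF s] by blast
next
  have m: "er T a b \<Longrightarrow> er (insert {x,y} T) a b" for a b by (rule er_mono[rotated]) auto
  have xy: "er (insert {x,y} T) x y" "er (insert {x,y} T) y x" using er_edge[of x y] er_edge[of y x]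
    by (auto simp: insert_commute)
  assume "er T u v \<or> (er T u x \<and> er T y v) \<or> (er T u y \<and> er T x v)"
  then show "er (insert {x,y} T) u v" using m xy er_trans by metis
qed

lemma sp_vals: "sp t 0 0" "sp t 1 1" "sp t 2 2" "sp t 0 1 \<longleftrightarrow> t = 0 \<or> t = 3" "sp t 1 0 \<longleftrightarrow> t = 0 \<or> t = 3"
  "sp t 1 2 \<longleftrightarrow> t = 0 \<or> t = 1" "sp t 2 1 \<longleftrightarrow> t = 0 \<or> t = 1" "sp t 0 2 \<longleftrightarrow> t = 0 \<or> t = 2" "sp t 2 0 \<longleftrightarrow> t = 0 \<or> t = 2"
  unfolding sp_def by (auto simp: doubleton_eq_iff)

lemma sub3: "T \<subseteq> {A,B,C} \<longleftrightarrow> (T = {} \<or> T = {A} \<or> T = {B} \<or> T = {C} \<or> T = {A,B} \<or> T = {A,C} \<or> T = {B,C} \<or> T = {A,B,C})"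
proof -
  have "T \<subseteq> {A,B,C} \<longleftrightarrow> T \<in> Pow {A,B,C}" by simp
  also have "Pow {A,B,C} = {{}, {A}, {B}, {C}, {A,B}, {A,C}, {B,C}, {A,B,C}}"
    by (auto simp: Pow_insert)
  finally show ?thesis by simp
qed

lemma acyc_one: "x \<noteq> y \<Longrightarrow> acyc {{x,y}}"
  unfolding acyc_def by (auto simp: er_empty doubleton_eq_iff)

lemma acyc_path:
  assumes d: "x \<noteq> y" "y \<noteq> z" "x \<noteq> z"
  shows "acyc {{x,y},{y,z}}"
proof -
  have ne: "{x,y} \<noteq> {y,z}" using d by (auto simp: doubleton_eq_iff)
  have r1: "{{x,y},{y,z}} - {{x,y}} = {{y,z}}" "{{x,y},{y,z}} - {{y,z}} = {{x,y}}" using ne by auto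
  have n: "\<not> er {{y,z}} x y" "\<not> er {{y,z}} y x" "\<not> er {{x,y}} y z" "\<not> er {{x,y}} z y"
    using d by (simp_all add: er_insert er_empty)
  show ?thesis unfolding acyc_def
  proof (intro ballI allI impI)
    fix e x' y' assume e: "e \<in> {{x,y},{y,z}}" "e = {x',y'}"
    then consider "e = {x,y}" | "e = {y,z}" by blast
    then show "\<not> er ({{x,y},{y,z}} - {e}) x' y'"
    proof cases
      case 1
      then have "x' = x \<and> y' = y \<or> x' = y \<and> y' = x" using e(2) by (simp add: doubleton_eq_iff)
      then show ?thesis using 1 r1 n by auto
    next
      case 2
      then have "x' = y \<and> y' = z \<or> x' = z \<and> y' = y" using e(2) by (simp add: doubleton_eq_iff)
      then show ?thesis using 2 r1 n by auto
    qed
  qed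
qed

lemma not_acyc_tri:
  assumes d: "a \<noteq> b" "b \<noteq> c" "a \<noteq> c"
  shows "\<not> acyc {{a,b},{b,c},{a,c}}"
proof
  assume A: "acyc {{a,b},{b,c},{a,c}}"
  have ne: "{a,c} \<noteq> {a,b}" "{a,c} \<noteq> {b,c}" using d by (auto simp: doubleton_eq_iff)
  have r: "{{a,b},{b,c},{a,c}} - {{a,c}} = {{a,b},{b,c}}" using ne by auto
  have E: "er {{a,b},{b,c}} a c" by (simp add: er_insert er_empty)
  have "{a,c} \<in> {{a,b},{b,c},{a,c}}" by simp
  with A have "\<not> er ({{a,b},{b,c},{a,c}} - {{a,c}}) a c" unfolding acyc_def by blast
  then show False using r E by simp
qed

lemma tri_count:
  assumes d: "a \<noteq> b" "b \<noteq> c" "a \<noteq> c" and q: "q 0 = a" "q 1 = b" "q 2 = c" and t: "t < 5"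
  shows "card {T. T \<subseteq> {{a,b},{b,c},{a,c}} \<and> acyc T \<and> stOK q t T} = (if t = 0 then 3 else 1)"
proof -
  have q1: "q (Suc 0) = b" using q by simp
  have ds: "b \<noteq> a" "c \<noteq> b" "c \<noteq> a" using d by auto
  have sk: "stOK q t T \<longleftrightarrow> (\<forall>i<3. \<forall>j<3. er T (q i) (q j) \<longleftrightarrow> sp t i j)" for T unfolding stOK_def ..
  have st1: "stOK q t {} \<longleftrightarrow> t = 4" using t unfolding sk all3 q q1 sp_vals[unfolded One_nat_def] by (simp add: er_empty d ds sp_vals[unfolded One_nat_def]; presburger)
  have st2: "stOK q t {{a,b}} \<longleftrightarrow> t = 3" using t unfolding sk all3 q q1 sp_vals[unfolded One_nat_def] by (simp add: er_insert er_empty d ds sp_vals[unfolded One_nat_def]; presburger)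
  have st3: "stOK q t {{b,c}} \<longleftrightarrow> t = 1" using t unfolding sk all3 q q1 sp_vals[unfolded One_nat_def] by (simp add: er_insert er_empty d ds sp_vals[unfolded One_nat_def]; presburger)
  have st4: "stOK q t {{a,c}} \<longleftrightarrow> t = 2" using t unfolding sk all3 q q1 sp_vals[unfolded One_nat_def] by (simp add: er_insert er_empty d ds sp_vals[unfolded One_nat_def]; presburger)
  have st5: "stOK q t {{a,b},{b,c}} \<longleftrightarrow> t = 0" using t unfolding sk all3 q q1 sp_vals[unfolded One_nat_def] by (simp add: er_insert er_empty d ds sp_vals[unfolded One_nat_def]; presburger)
  have st6: "stOK q t {{a,b},{a,c}} \<longleftrightarrow> t = 0" using t unfolding sk all3 q q1 sp_vals[unfolded One_nat_def] by (simp add: er_insert er_empty d ds sp_vals[unfolded One_nat_def]; presburger)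
  have st7: "stOK q t {{b,c},{a,c}} \<longleftrightarrow> t = 0" using t unfolding sk all3 q q1 sp_vals[unfolded One_nat_def] by (simp add: er_insert er_empty d ds sp_vals[unfolded One_nat_def]; presburger)
  have ac: "acyc {}" "acyc {{a,b}}" "acyc {{b,c}}" "acyc {{a,c}}" "acyc {{a,b},{b,c}}" "acyc {{a,b},{a,c}}"
    "acyc {{b,c},{a,c}}" "\<not> acyc {{a,b},{b,c},{a,c}}"
  proof -
    show "acyc {}" by (simp add: acyc_def)
    show "acyc {{a,b}}" "acyc {{b,c}}" "acyc {{a,c}}" using d by (simp_all add: acyc_one)
    show "acyc {{a,b},{b,c}}" using d by (rule acyc_path)
    have "acyc {{b,a},{a,c}}" using d by (intro acyc_path) auto
    then show "acyc {{a,b},{a,c}}" by (simp add: insert_commute)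
    have "acyc {{b,c},{c,a}}" using d by (intro acyc_path) auto
    then show "acyc {{b,c},{a,c}}" by (simp add: insert_commute)
    show "\<not> acyc {{a,b},{b,c},{a,c}}" by (rule not_acyc_tri[OF d])
  qed
  let ?R = "(if t = 0 then {{{a,b},{b,c}}, {{a,b},{a,c}}, {{b,c},{a,c}}} else if t = 1 then {{{b,c}}}
     else if t = 2 then {{{a,c}}} else if t = 3 then {{{a,b}}} else {{}})"
  have e: "{T. T \<subseteq> {{a,b},{b,c},{a,c}} \<and> acyc T \<and> stOK q t T} = ?R"
  proof (rule set_eqI)
    fix T
    show "T \<in> {T. T \<subseteq> {{a,b},{b,c},{a,c}} \<and> acyc T \<and> stOK q t T} \<longleftrightarrow> T \<in> ?R"
    proof (cases "T \<subseteq> {{a,b},{b,c},{a,c}}")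
      case True
      have n1: "{a,c} \<notin> {{a,b},{b,c}}" "{b,c} \<notin> {{a,b},{a,c}}" "{a,b} \<notin> {{b,c},{a,c}}"
        using d by (auto simp: doubleton_eq_iff)
      have ne3: "{{a,b},{b,c},{a,c}} \<noteq> {{a,b},{b,c}}" "{{a,b},{b,c},{a,c}} \<noteq> {{a,b},{a,c}}" "{{a,b},{b,c},{a,c}} \<noteq> {{b,c},{a,c}}"
      proof -
        show "{{a,b},{b,c},{a,c}} \<noteq> {{a,b},{b,c}}" using n1(1) by (metis insertCI)
        show "{{a,b},{b,c},{a,c}} \<noteq> {{a,b},{a,c}}" using n1(2) by (metis insertCI)
        show "{{a,b},{b,c},{a,c}} \<noteq> {{b,c},{a,c}}" using n1(3) by (metis insertCI)
      qed
      from True[unfolded sub3] show ?thesis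
        using t by (elim disjE) (simp_all add: st1 st2 st3 st4 st5 st6 st7 ac ne3 doubleton_eq_iff d ds)
    next
      case False
      moreover have "X \<subseteq> {{a,b},{b,c},{a,c}}" if "X \<in> ?R" for X using that by (auto split: if_splits)
      ultimately show ?thesis by blast
    qed
  qed
  show ?thesis unfolding e using d by (simp add: doubleton_eq_iff)
qed


lemma W_cells: "W cells [0..<10] = [[0, 0, 0, 196, 0, 0, 0, 0, 0, 0, 0, 0], [0, 0, 0, 0, 420, 0, 0, 0, 0, 0, 0, 0], [0, 0, 0, 0, 420, 0, 0, 0, 0, 0, 0, 0], [0, 0, 0, 0, 420, 0, 0, 0, 0, 0, 0, 0], [0, 0, 0, 0, 0, 2700, 0, 0, 0, 0, 0, 0]]"
  by code_simp




lemma sg_p_distinct: "sg_p1 \<noteq> sg_p2" "sg_p2 \<noteq> sg_p3" "sg_p1 \<noteq> sg_p3"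
  unfolding sg_p_co co_eq_iff by auto

lemma sg_E0_explicit: "sg_E 0 = {{sg_p1,sg_p2},{sg_p2,sg_p3},{sg_p1,sg_p3}}"
  unfolding sg_E_0 sg_V0_def using sg_p_distinct by (auto simp: insert_commute)

lemma Nn_0: "t < 5 \<Longrightarrow> Nn 0 t = (if t = 0 then 3 else 1)"
proof -
  assume t: "t < 5"
  have "RFn 0 t = {T. T \<subseteq> {{sg_p1,sg_p2},{sg_p2,sg_p3},{sg_p1,sg_p3}} \<and> acyc T \<and> stOK sgp t T}"
  proof (rule set_eqI)
    fix T
    have r: "\<forall>x\<in>sg_V0. \<exists>b\<in>sg_V0. er T x b"
    proof
      fix x assume x: "x \<in> sg_V0"
      show "\<exists>b\<in>sg_V0. er T x b" using x by (intro bexI[where x=x]) simp_all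
    qed
    show "T \<in> RFn 0 t \<longleftrightarrow> T \<in> {T. T \<subseteq> {{sg_p1,sg_p2},{sg_p2,sg_p3},{sg_p1,sg_p3}} \<and> acyc T \<and> stOK sgp t T}"
      unfolding RFn_def rforest_def sg_V_0 sg_E0_explicit using r by auto
  qed
  then show ?thesis unfolding Nn_def
    using tri_count[OF sg_p_distinct, of sgp t] t by (simp add: sgp_def)
qed

definition fr :: "nat \<Rightarrow> real" where
  "fr n = 2 powr ((2/5) * (6 ^ n - 1)) * 3 powr ((13 * 6 ^ n - 15 * real n + 12) / 25)
         * 5 powr ((3 * 6 ^ n - 15 * real n - 3) / 25) * 7 powr ((7 * 6 ^ n + 15 * real n - 7) / 25)"

definition rr :: "nat \<Rightarrow> real" where "rr n = 15^n / (3 * 7^n)"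

lemma fr_0: "fr 0 = 3"
  unfolding fr_def by simp

lemma pw: "(x::real) > 0 \<Longrightarrow> x powr (6 * a + b) = (x powr a) ^ 6 * x powr b"
  by (simp add: powr_add powr_power)

lemma fr_Suc: "fr (Suc n) = 196 * fr n ^ 6 * rr n ^ 3"
proof -
  let ?A = "(2/5) * (6 ^ n - 1::real)"
  let ?B = "(13 * 6 ^ n - 15 * real n + 12) / (25::real)"
  let ?C = "(3 * 6 ^ n - 15 * real n - 3) / (25::real)"
  let ?D = "(7 * 6 ^ n + 15 * real n - 7) / (25::real)"
  have a: "(2/5) * (6 ^ Suc n - 1::real) = 6 * ?A + 2" by (simp add: field_simps)
  have b: "(13 * 6 ^ Suc n - 15 * real (Suc n) + 12) / (25::real) = 6 * ?B + (real (3*n) - 3)" by (simp add: field_simps)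
  have c: "(3 * 6 ^ Suc n - 15 * real (Suc n) - 3) / (25::real) = 6 * ?C + real (3*n)" by (simp add: field_simps)
  have d: "(7 * 6 ^ Suc n + 15 * real (Suc n) - 7) / (25::real) = 6 * ?D + (2 - real (3*n))" by (simp add: field_simps)
  have q2: "(2::real) powr 2 = 4" using powr_realpow[of 2 2] by simp
  have q3: "(3::real) powr (real (3*n) - 3) = 3^(3*n) / 27"
    using powr_realpow[of 3 "3*n"] powr_realpow[of 3 3] by (simp add: powr_diff)
  have q5: "(5::real) powr (real (3*n)) = 5^(3*n)" using powr_realpow[of 5 "3*n"] by simp
  have q7: "(7::real) powr (2 - real (3*n)) = 49 / 7^(3*n)"
    using powr_realpow[of 7 "3*n"] powr_realpow[of 7 2] by (simp add: powr_diff)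
  have e2: "2 powr (6 * ?A + 2) = (2 powr ?A)^6 * 4" using pw[of 2 ?A 2] q2 by simp
  have e3: "3 powr (6 * ?B + (real (3*n) - 3)) = (3 powr ?B)^6 * (3^(3*n) / 27)"
    using pw[of 3 ?B "real (3*n) - 3"] q3 by simp
  have e5: "5 powr (6 * ?C + real (3*n)) = (5 powr ?C)^6 * 5^(3*n)"
    using pw[of 5 ?C "real (3*n)"] q5 by simp
  have e7: "7 powr (6 * ?D + (2 - real (3*n))) = (7 powr ?D)^6 * (49 / 7^(3*n))"
    using pw[of 7 ?D "2 - real (3*n)"] q7 by simp
  have f15: "((15::real)^n)^3 = 3^(3*n) * 5^(3*n)"
  proof -
    have "((15::real)^n)^3 = 15^(3*n)" by (simp add: power_mult[symmetric] mult.commute)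
    also have "(15::real)^(3*n) = (3*5)^(3*n)" by simp
    also have "\<dots> = 3^(3*n) * 5^(3*n)" by (rule power_mult_distrib)
    finally show ?thesis .
  qed
  have f7: "((7::real)^n)^3 = 7^(3*n)" by (simp add: power_mult[symmetric] mult.commute)
  have r: "rr n ^ 3 = 3^(3*n) * 5^(3*n) / (27 * 7^(3*n))"
    unfolding rr_def power_divide power_mult_distrib f15 f7 by simp
  have "fr (Suc n) = (2 powr ?A)^6 * 4 * ((3 powr ?B)^6 * (3^(3*n) / 27)) * ((5 powr ?C)^6 * 5^(3*n))
      * ((7 powr ?D)^6 * (49 / 7^(3*n)))"
    unfolding fr_def a b c d e2 e3 e5 e7 ..
  also have "\<dots> = 196 * fr n ^ 6 * rr n ^ 3"
    unfolding r fr_def by (simp add: power_mult_distrib field_simps)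
  finally show ?thesis .
qed

lemma prod_list_scale: "(\<And>t. t \<in> set ts \<Longrightarrow> g t = c * h t) \<Longrightarrow> prod_list (map g ts) = c ^ length ts * prod_list (map h ts)"
  for c :: real by (induction ts) auto

lemma closed_form: "t < 5 \<Longrightarrow> real (Nn n t) = fr n * wt (rr n) t"
proof (induction n arbitrary: t)
  case 0
  then show ?case using Nn_0 by (auto simp: fr_0 rr_def wt_def power2_eq_square)
next
  case (Suc n)
  have lc: "length cells = 6" by (simp add: cells_def)
  have "real (Nn (Suc n) t) = (\<Sum>ts\<in>LSet 6. if good ts t then real (prod_list (map (Nn n) ts)) else 0)"
    using Nn_Suc[OF Suc.prems] by (simp add: of_nat_sum if_distrib cong: if_cong)
  also have "\<dots> = (\<Sum>ts\<in>LSet 6. if good ts t then fr n ^ 6 * prod_list (map (wt (rr n)) ts) else 0)"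
  proof (rule sum.cong[OF refl])
    fix ts assume ts: "ts \<in> LSet 6"
    have "real (prod_list (map (Nn n) ts)) = prod_list (map (\<lambda>t. real (Nn n t)) ts)"
      by (induction ts) auto
    also have "\<dots> = fr n ^ length ts * prod_list (map (wt (rr n)) ts)"
      by (rule prod_list_scale) (use ts Suc.IH in \<open>auto simp: LSet_def\<close>)
    also have "length ts = 6" using ts by (simp add: LSet_def)
    finally show "(if good ts t then real (prod_list (map (Nn n) ts)) else 0) =
      (if good ts t then fr n ^ 6 * prod_list (map (wt (rr n)) ts) else 0)" by simp
  qed
  also have "\<dots> = fr n ^ 6 * (\<Sum>ts\<in>LSet 6. if good ts t then prod_list (map (wt (rr n)) ts) else 0)"
    by (simp add: sum_distrib_left if_distrib cong: if_cong)
  also have "(\<Sum>ts\<in>LSet 6. if good ts t then prod_list (map (wt (rr n)) ts) else 0) = Wg (rr n) t cells [0..<10]"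
    unfolding Wg_sum lc
    by (rule sum.cong[OF refl]) (auto simp: goodrec_good LSet_def)
  also have "\<dots> = peval (W cells [0..<10] ! t) (rr n)"
    by (rule peval_W[OF Suc.prems, symmetric])
  finally have N: "real (Nn (Suc n) t) = fr n ^ 6 * peval (W cells [0..<10] ! t) (rr n)" .
  have rS: "rr (Suc n) = 15 / 7 * rr n" unfolding rr_def by (simp add: field_simps)
  consider "t = 0" | "t = 1" | "t = 2" | "t = 3" | "t = 4" using Suc.prems by linarith
  then show ?case
    unfolding N W_cells fr_Suc rS
    by cases (simp_all add: wt_def field_simps power2_eq_square eval_nat_numeral)
qed

lemma span_iff:
  "spanning_tree (sg_V n) (sg_E n) T \<longleftrightarrow> rforest (sg_V n) (sg_E n) sg_V0 T \<and> stOK sgp 0 T"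
proof
  assume S: "spanning_tree (sg_V n) (sg_E n) T"
  have V0: "sg_V0 \<subseteq> sg_V n" by (rule V0_sub)
  have p1: "sg_p1 \<in> sg_V0" by (simp add: sg_V0_def)
  have "\<forall>x\<in>sg_V n. \<exists>b\<in>sg_V0. er T x b" using S p1 V0 unfolding spanning_tree_def by blast
  moreover have "acyc T" using S unfolding spanning_tree_def acyc_def by blast
  moreover have "stOK sgp 0 T"
    unfolding stOK_def
  proof (intro allI impI)
    fix i j :: nat assume ij: "i < 3" "j < 3"
    have m: "sgp i \<in> sg_V n" "sgp j \<in> sg_V n" using V0 sgp_V0 ij by auto
    have "er T (sgp i) (sgp j)" using S m unfolding spanning_tree_def by blast
    moreover have "sp 0 i j" by (simp add: sp_def)
    ultimately show "er T (sgp i) (sgp j) = sp 0 i j" by simp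
  qed
  ultimately show "rforest (sg_V n) (sg_E n) sg_V0 T \<and> stOK sgp 0 T"
    using S unfolding rforest_def spanning_tree_def by blast
next
  assume R: "rforest (sg_V n) (sg_E n) sg_V0 T \<and> stOK sgp 0 T"
  have conn: "er T x y" if "x \<in> sg_V n" "y \<in> sg_V n" for x y
  proof -
    have rt: "\<forall>x\<in>sg_V n. \<exists>b\<in>sg_V0. er T x b" using R unfolding rforest_def by blast
    from bspec[OF rt that(1)] obtain b1 where b1: "b1 \<in> sg_V0" "er T x b1" by blast
    from bspec[OF rt that(2)] obtain b2 where b2: "b2 \<in> sg_V0" "er T y b2" by blast
    obtain i where i: "i < 3" "b1 = sgp i" using b1(1) sgp_V0 by (metis imageE lessThan_iff)
    obtain j where j: "j < 3" "b2 = sgp j" using b2(1) sgp_V0 by (metis imageE lessThan_iff)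
    have st: "stOK sgp 0 T" using R by blast
    have "er T (sgp i) (sgp j)" using st i(1) j(1) unfolding stOK_def by (simp add: sp_def)
    then have bb: "er T b1 b2" using i j by simp
    have "er T b2 y" using b2(2) by (rule er_sym)
    then show ?thesis using b1(2) bb er_trans by metis
  qed
  have Tsub: "T \<subseteq> sg_E n" and Ac: "acyc T" using R unfolding rforest_def by auto
  have A: "\<forall>e\<in>T. \<forall>x y. e = {x,y} \<longrightarrow> \<not> er (T - {e}) x y" using Ac unfolding acyc_def .
  have C: "\<forall>x\<in>sg_V n. \<forall>y\<in>sg_V n. er T x y" using conn by blast
  show "spanning_tree (sg_V n) (sg_E n) T"
    unfolding spanning_tree_def using Tsub C A by (intro conjI)
qed

theorem mainTheorem3:
  fixes n :: nat
  assumes "n \<ge> 2"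
  shows "real (num_spanning_trees (sg_V n) (sg_E n)) =
           2 powr ((2/5) * (6 ^ n - 1))
         * 3 powr ((13 * 6 ^ n - 15 * real n + 12) / 25)
         * 5 powr ((3 * 6 ^ n - 15 * real n - 3) / 25)
         * 7 powr ((7 * 6 ^ n + 15 * real n - 7) / 25)"
proof -
  have "num_spanning_trees (sg_V n) (sg_E n) = Nn n 0"
    unfolding num_spanning_trees_def Nn_def RFn_def span_iff ..
  then have "real (num_spanning_trees (sg_V n) (sg_E n)) = fr n"
    using closed_form[of 0 n] by (simp add: wt_def)
  then show ?thesis unfolding fr_def .
qed


end
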